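(* In the setting below, there exist an affine function $c:\mathbb R^{n\times n}\to\mathbb R$ and an affine matrix-valued function $\mathbf Z:\mathbb R^{n\times n}\to\mathbb R^{n\times n}$, determined by $\mathrm{metric}^{(0)}$, and for each $l\in[1,t]$ a constant $\mu_l\in\mathbb R$ and a matrix $\mathbf B^{(l)}\in\mathbb R^{n\times n}$, determined by $\mathrm{metric}^{(l)}$ and the label vector $\mathbf y$, such that for every $\theta\in\mathbb R^m$, $$\min_{\mathbf Q\in\Delta}\max_{\mathbf P\in\Delta\cap\Gamma}\Big[O^{(0)}(\mathbf Q,\mathbf P)-\langle\mathbf Q^\top\mathbf 1,\Psi^\top\theta\rangle\Big]$$ equals the optimal value of the linear program $$\min_{\mathbf Q\in\Delta,\ \boldsymbol\alpha\in\mathbb R^{n\times n}_{\ge0},\ \boldsymbol\beta\in\mathbb R^t_{\ge0},\ v\ge0}\ v+c(\mathbf Q)-\langle\mathbf Q,\Psi^\top\theta\mathbf 1^\top\rangle+\sum_{l=1}^t\beta_l(\mu_l-\tau_l)$$ $$\text{s.t.}\quad v\ge\mathbf Z(\mathbf Q)_{(i,k)}-\alpha_{i,k}+\tfrac1k\textstyle\sum_j\alpha_{j,k}+\sum_{l=1}^t\beta_l\,(\mathbf B^{(l)})_{(i,k)}\quad\forall i,k\in[1,n].$$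
   Context: $n,m,t\ge1$, $\mathbf y\in\{0,1\}^n$, $l^\star=\sum_iy_i$, $\Psi\in\mathbb R^{m\times n}$, $\tau_1,\dots,\tau_t\in\mathbb R$. Metrics $\mathrm{metric}^{(i)}(\hat{\mathbf y},\check{\mathbf y})=\sum_j\frac{a_j^{(i)}\mathrm{TP}+b_j^{(i)}\mathrm{TN}+f_j^{(i)}(\mathrm{PP},\mathrm{AP})}{g_j^{(i)}(\mathrm{PP},\mathrm{AP})}$, $i=0,\dots,t$, with $\mathrm{TP}=\sum\hat y_i\check y_i$, $\mathrm{TN}=\sum(1-\hat y_i)(1-\check y_i)$, $\mathrm{PP}=\sum\hat y_i$, $\mathrm{AP}=\sum\check y_i$, constants $a_j^{(i)},b_j^{(i)}$, functions $f_j^{(i)},g_j^{(i)}:\{0,\dots,n\}^2\to\mathbb R$ with $g_j^{(i)}$ never zero. $\Delta=\{\mathbf P\in\mathbb R^{n\times n}: p_{i,k}\ge0;\ p_{i,k}\le\frac1k\sum_jp_{j,k}\ \forall i,k;\ \sum_k\frac1k\sum_ip_{i,k}\le1\}$. From $\mathbf P$: $\mathbf p_k^1=\mathbf P_{(:,k)}$ ($k\ge1$), $\mathbf p_0^1=\mathbf 0$; $r_k=\frac1k\mathbf 1^\top\mathbf p_k^1$ ($k\ge1$), $r_0=1-\sum_{k\ge1}r_k$; $\mathbf p_k^0=r_k\mathbf 1-\mathbf p_k^1$; likewise $\mathbf q_l^1,\mathbf q_l^0,s_l$ from $\mathbf Q$. $O^{(0)}(\mathbf Q,\mathbf P)=\sum_{k,l=0}^n\sum_j\frac{1}{g^{(0)}_j(k,l)}\{a^{(0)}_j[\mathbf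 p_k^1\cdot\mathbf q_l^1]+b^{(0)}_j[\mathbf p_k^0\cdot\mathbf q_l^0]+f^{(0)}_j(k,l)r_ks_l\}$. $\Gamma=\{\mathbf P:\sum_{k=0}^n\sum_j\frac{1}{g^{(i)}_j(k,l^\star)}\{a^{(i)}_j[\mathbf p_k^1\cdot\mathbf y]+b^{(i)}_j[\mathbf p_k^0\cdot(\mathbf 1-\mathbf y)]+f^{(i)}_j(k,l^\star)r_k\}\ge\tau_i\ \forall i\in[1,t]\}$. *)

theory Defs
  imports Complex_Main "HOL-Library.Extended_Real"
begin

(* Matrices in R^{n x n} are functions nat => nat => real, entries indexed by
   i (sample) and k (count) in {1..n}; vectors in R^n are nat => real on {1..n}.
   Metric data: for metric index i in {0..t} there are J i terms; term j has
   constants a i j, b i j and functions f i j, g i j on {0..n}^2. *)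

definition dotv :: "nat \<Rightarrow> (nat \<Rightarrow> real) \<Rightarrow> (nat \<Rightarrow> real) \<Rightarrow> real" where
  "dotv n u w = (\<Sum>i\<in>{1..n}. u i * w i)"

definition pv1 :: "(nat \<Rightarrow> nat \<Rightarrow> real) \<Rightarrow> nat \<Rightarrow> nat \<Rightarrow> real" where
  "pv1 P k = (\<lambda>i. if k = 0 then 0 else P i k)"

definition rr :: "nat \<Rightarrow> (nat \<Rightarrow> nat \<Rightarrow> real) \<Rightarrow> nat \<Rightarrow> real" where
  "rr n P k = (if k = 0
      then 1 - (\<Sum>k'\<in>{1..n}. (1 / real k') * (\<Sum>i\<in>{1..n}. P i k'))
      else (1 / real k) * (\<Sum>i\<in>{1..n}. P i k))"

definition pv0 :: "nat \<Rightarrow> (nat \<Rightarrow> nat \<Rightarrow> real) \<Rightarrow> nat \<Rightarrow> nat \<Rightarrow> real" where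
  "pv0 n P k = (\<lambda>i. rr n P k - pv1 P k i)"

definition Delta :: "nat \<Rightarrow> (nat \<Rightarrow> nat \<Rightarrow> real) set" where
  "Delta n = {P. (\<forall>i k. (i \<notin> {1..n} \<or> k \<notin> {1..n}) \<longrightarrow> P i k = 0)
      \<and> (\<forall>i\<in>{1..n}. \<forall>k\<in>{1..n}. 0 \<le> P i k \<and> P i k \<le> (1 / real k) * (\<Sum>j\<in>{1..n}. P j k))
      \<and> (\<Sum>k\<in>{1..n}. (1 / real k) * (\<Sum>i\<in>{1..n}. P i k)) \<le> 1}"

definition O0 :: "nat \<Rightarrow> (nat \<Rightarrow> nat \<Rightarrow> real) \<Rightarrow> (nat \<Rightarrow> nat \<Rightarrow> real)
    \<Rightarrow> (nat \<Rightarrow> nat \<Rightarrow> nat \<Rightarrow> nat \<Rightarrow> real) \<Rightarrow> (nat \<Rightarrow> nat \<Rightarrow> nat \<Rightarrow> nat \<Rightarrow> real)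
    \<Rightarrow> (nat \<Rightarrow> nat) \<Rightarrow> (nat \<Rightarrow> nat \<Rightarrow> real) \<Rightarrow> (nat \<Rightarrow> nat \<Rightarrow> real) \<Rightarrow> real" where
  "O0 n a b f g J Q P =
     (\<Sum>k\<in>{0..n}. \<Sum>l\<in>{0..n}. \<Sum>j<J 0.
        (1 / g 0 j k l) * (a 0 j * dotv n (pv1 P k) (pv1 Q l)
                          + b 0 j * dotv n (pv0 n P k) (pv0 n Q l)
                          + f 0 j k l * rr n P k * rr n Q l))"

definition lstar :: "nat \<Rightarrow> (nat \<Rightarrow> nat) \<Rightarrow> nat" where
  "lstar n y = (\<Sum>i\<in>{1..n}. y i)"

definition Gamma :: "nat \<Rightarrow> nat \<Rightarrow> (nat \<Rightarrow> nat \<Rightarrow> real) \<Rightarrow> (nat \<Rightarrow> nat \<Rightarrow> real)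
    \<Rightarrow> (nat \<Rightarrow> nat \<Rightarrow> nat \<Rightarrow> nat \<Rightarrow> real) \<Rightarrow> (nat \<Rightarrow> nat \<Rightarrow> nat \<Rightarrow> nat \<Rightarrow> real)
    \<Rightarrow> (nat \<Rightarrow> nat) \<Rightarrow> (nat \<Rightarrow> nat) \<Rightarrow> (nat \<Rightarrow> real) \<Rightarrow> (nat \<Rightarrow> nat \<Rightarrow> real) set" where
  "Gamma n t a b f g J y \<tau> = {P. \<forall>i\<in>{1..t}.
     (\<Sum>k\<in>{0..n}. \<Sum>j<J i.
        (1 / g i j k (lstar n y)) * (a i j * dotv n (pv1 P k) (\<lambda>s. real (y s))
           + b i j * dotv n (pv0 n P k) (\<lambda>s. 1 - real (y s))
           + f i j k (lstar n y) * rr n P k)) \<ge> \<tau> i}"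

definition PsiT :: "nat \<Rightarrow> (nat \<Rightarrow> nat \<Rightarrow> real) \<Rightarrow> (nat \<Rightarrow> real) \<Rightarrow> nat \<Rightarrow> real" where
  "PsiT m Psi \<theta> = (\<lambda>i. \<Sum>r\<in>{1..m}. Psi r i * \<theta> r)"

definition game_value where
  "game_value n t m a b f g J y \<tau> Psi \<theta> =
     (INF Q\<in>Delta n. SUP P\<in>Delta n \<inter> Gamma n t a b f g J y \<tau>.
        ereal (O0 n a b f g J Q P - dotv n (\<lambda>i. \<Sum>k\<in>{1..n}. Q i k) (PsiT m Psi \<theta>)))"

definition aff_scalar :: "nat \<Rightarrow> real \<Rightarrow> (nat \<Rightarrow> nat \<Rightarrow> real) \<Rightarrow> (nat \<Rightarrow> nat \<Rightarrow> real) \<Rightarrow> real" where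
  "aff_scalar n c0 C Q = c0 + (\<Sum>i\<in>{1..n}. \<Sum>k\<in>{1..n}. C i k * Q i k)"

definition aff_matrix :: "nat \<Rightarrow> (nat \<Rightarrow> nat \<Rightarrow> real) \<Rightarrow> (nat \<Rightarrow> nat \<Rightarrow> nat \<Rightarrow> nat \<Rightarrow> real)
    \<Rightarrow> (nat \<Rightarrow> nat \<Rightarrow> real) \<Rightarrow> nat \<Rightarrow> nat \<Rightarrow> real" where
  "aff_matrix n Z0 ZL Q = (\<lambda>i k. Z0 i k + (\<Sum>j\<in>{1..n}. \<Sum>l\<in>{1..n}. ZL i k j l * Q j l))"

definition lp_value where
  "lp_value n t m c Z \<mu> B \<tau> Psi \<theta> =
     Inf {ereal (v + c Q - (\<Sum>i\<in>{1..n}. \<Sum>k\<in>{1..n}. Q i k * PsiT m Psi \<theta> i)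
                  + (\<Sum>l\<in>{1..t}. \<beta> l * (\<mu> l - \<tau> l)))
          | Q \<alpha> \<beta> v. Q \<in> Delta n
              \<and> (\<forall>i\<in>{1..n}. \<forall>k\<in>{1..n}. 0 \<le> \<alpha> i k)
              \<and> (\<forall>l\<in>{1..t}. 0 \<le> (\<beta>::nat \<Rightarrow> real) l)
              \<and> 0 \<le> (v::real)
              \<and> (\<forall>i\<in>{1..n}. \<forall>k\<in>{1..n}.
                   v \<ge> Z Q i k - \<alpha> i k + (1 / real k) * (\<Sum>j\<in>{1..n}. \<alpha> j k)
                        + (\<Sum>l\<in>{1..t}. \<beta> l * B l i k))}"

end

theory Submission
  imports Defs
begin


definition sdot :: "'v set \<Rightarrow> ('v \<Rightarrow> real) \<Rightarrow> ('v \<Rightarrow> real) \<Rightarrow> real" where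
  "sdot V a x = (\<Sum>v\<in>V. a v * x v)"

definition sat :: "'v set \<Rightarrow> (('v \<Rightarrow> real) \<times> real) set \<Rightarrow> ('v \<Rightarrow> real) \<Rightarrow> bool" where
  "sat V R x = (\<forall>r\<in>R. sdot V (fst r) x \<le> snd r)"

definition supp :: "'v set \<Rightarrow> ('v \<Rightarrow> real) \<Rightarrow> bool" where
  "supp V a = (\<forall>v. v \<notin> V \<longrightarrow> a v = 0)"

definition radd :: "('v \<Rightarrow> real) \<times> real \<Rightarrow> ('v \<Rightarrow> real) \<times> real \<Rightarrow> ('v \<Rightarrow> real) \<times> real" where
  "radd r s = ((\<lambda>v. fst r v + fst s v), snd r + snd s)"

definition rscale :: "real \<Rightarrow> ('v \<Rightarrow> real) \<times> real \<Rightarrow> ('v \<Rightarrow> real) \<times> real" where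
  "rscale c r = ((\<lambda>v. c * fst r v), c * snd r)"

lemma fst_radd[simp]: "fst (radd r s) v = fst r v + fst s v" by (simp add: radd_def)
lemma snd_radd[simp]: "snd (radd r s) = snd r + snd s" by (simp add: radd_def)
lemma fst_rscale[simp]: "fst (rscale c r) v = c * fst r v" by (simp add: rscale_def)
lemma snd_rscale[simp]: "snd (rscale c r) = c * snd r" by (simp add: rscale_def)

lemma row_eqI: "(\<And>v. fst r v = fst s v) \<Longrightarrow> snd r = snd s \<Longrightarrow> r = s"
  by (metis prod_eqI ext)

inductive_set rcone :: "(('v \<Rightarrow> real) \<times> real) set \<Rightarrow> (('v \<Rightarrow> real) \<times> real) set"
  for R where
  zero: "((\<lambda>v. 0), 0) \<in> rcone R"
| base: "r \<in> R \<Longrightarrow> r \<in> rcone R"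
| add: "r \<in> rcone R \<Longrightarrow> s \<in> rcone R \<Longrightarrow> radd r s \<in> rcone R"
| scale: "r \<in> rcone R \<Longrightarrow> c \<ge> 0 \<Longrightarrow> rscale c r \<in> rcone R"

lemma rcone_trans: assumes "R' \<subseteq> rcone R" shows "r \<in> rcone R' \<Longrightarrow> r \<in> rcone R"
  by (induction r rule: rcone.induct) (use assms in \<open>auto intro: rcone.intros\<close>)

lemma rcone_coord0: assumes "\<forall>r\<in>R. fst r u = 0" shows "r \<in> rcone R \<Longrightarrow> fst r u = 0"
  by (induction r rule: rcone.induct) (use assms in auto)

lemma rcone_insert:
  "r \<in> rcone (insert q R) \<Longrightarrow> \<exists>lam r'. lam \<ge> 0 \<and> r' \<in> rcone R \<and> r = radd r' (rscale lam q)"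
proof (induction r rule: rcone.induct)
  case zero
  show ?case by (rule exI[of _ 0], rule exI[of _ "((\<lambda>v. 0), 0)"]) (auto intro: rcone.zero row_eqI)
next
  case (base r)
  then show ?case
  proof
    assume "r = q"
    then show ?thesis by (intro exI[of _ 1] exI[of _ "((\<lambda>v. 0), 0)"]) (auto intro: rcone.zero row_eqI)
  next
    assume "r \<in> R"
    then show ?thesis by (intro exI[of _ 0] exI[of _ r]) (auto intro: rcone.base row_eqI)
  qed
next
  case (add r s)
  then obtain l1 r1 l2 r2 where "l1 \<ge> 0" "r1 \<in> rcone R" "r = radd r1 (rscale l1 q)"
    "l2 \<ge> 0" "r2 \<in> rcone R" "s = radd r2 (rscale l2 q)" by blast
  then show ?case
    by (intro exI[of _ "l1 + l2"] exI[of _ "radd r1 r2"])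
      (auto intro: rcone.add row_eqI simp: algebra_simps)
next
  case (scale r c)
  then obtain l1 r1 where "l1 \<ge> 0" "r1 \<in> rcone R" "r = radd r1 (rscale l1 q)" by blast
  then show ?case using scale.hyps(2)
    by (intro exI[of _ "c * l1"] exI[of _ "rscale c r1"])
      (auto intro: rcone.scale row_eqI simp: algebra_simps)
qed

lemma if01_mult: "(if P then 1 else 0) * (z::real) = (if P then z else 0)" by simp

lemma rcone_index:
  assumes "finite I"
  shows "r \<in> rcone (h ` I) \<Longrightarrow> \<exists>y. (\<forall>i\<in>I. 0 \<le> y i)
     \<and> (\<forall>v. fst r v = (\<Sum>i\<in>I. y i * fst (h i) v)) \<and> snd r = (\<Sum>i\<in>I. y i * snd (h i))"
proof (induction r rule: rcone.induct)
  case zero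
  show ?case by (rule exI[of _ "\<lambda>_. 0"]) simp
next
  case (base r)
  then obtain i where i: "i \<in> I" "r = h i" by blast
  show ?case
    by (rule exI[of _ "\<lambda>j. if j = i then 1 else 0"]) (simp add: i assms if01_mult)
next
  case (add r s)
  then obtain y1 y2 where "\<forall>i\<in>I. 0 \<le> y1 i" "\<forall>v. fst r v = (\<Sum>i\<in>I. y1 i * fst (h i) v)"
    "snd r = (\<Sum>i\<in>I. y1 i * snd (h i))" "\<forall>i\<in>I. 0 \<le> y2 i" "\<forall>v. fst s v = (\<Sum>i\<in>I. y2 i * fst (h i) v)"
    "snd s = (\<Sum>i\<in>I. y2 i * snd (h i))" by blast
  then show ?case
    by (intro exI[of _ "\<lambda>i. y1 i + y2 i"]) (simp add: sum.distrib algebra_simps)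
next
  case (scale r c)
  then obtain y1 where "\<forall>i\<in>I. 0 \<le> y1 i" "\<forall>v. fst r v = (\<Sum>i\<in>I. y1 i * fst (h i) v)"
    "snd r = (\<Sum>i\<in>I. y1 i * snd (h i))" by blast
  then show ?case using scale.hyps(2)
    by (intro exI[of _ "\<lambda>i. c * y1 i"]) (simp add: sum_distrib_left algebra_simps)
qed

lemma sdot_lin: "sdot V (\<lambda>v. c1 * a v + c2 * b v) x = c1 * sdot V a x + c2 * sdot V b x"
  by (simp add: sdot_def sum.distrib sum_distrib_left algebra_simps)

lemma choose_t:
  fixes U L :: "'a \<Rightarrow> real"
  assumes "finite Pp" "finite M" "\<forall>p\<in>Pp. \<forall>m\<in>M. L m \<le> U p"
  shows "\<exists>t. (\<forall>p\<in>Pp. t \<le> U p) \<and> (\<forall>m\<in>M. L m \<le> t)"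
proof (cases "Pp = {}")
  case True
  have "\<forall>m\<in>M. L m \<le> (\<Sum>m\<in>M. \<bar>L m\<bar>)"
  proof
    fix m assume "m \<in> M"
    then have "\<bar>L m\<bar> \<le> (\<Sum>m\<in>M. \<bar>L m\<bar>)" by (intro member_le_sum) (auto simp: assms)
    then show "L m \<le> (\<Sum>m\<in>M. \<bar>L m\<bar>)" by linarith
  qed
  then show ?thesis using True by blast
next
  case False
  have "Min (U ` Pp) \<in> U ` Pp" using False assms by (intro Min_in) auto
  then obtain p0 where p0: "p0 \<in> Pp" "Min (U ` Pp) = U p0" by auto
  show ?thesis
    apply (rule exI[of _ "Min (U ` Pp)"])
  proof (intro conjI ballI)
    fix p assume "p \<in> Pp"
    then show "Min (U ` Pp) \<le> U p" using assms by (intro Min_le) auto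
  next
    fix m assume "m \<in> M"
    then show "L m \<le> Min (U ` Pp)" using assms p0 by auto
  qed
qed

lemma sdot_single: "sdot {w} a x = a w * x w" by (simp add: sdot_def)

lemma sdot_upd: assumes "finite V" "u \<notin> V"
  shows "sdot (insert u V) a (x(u:=t)) = a u * t + sdot V a x"
proof -
  have "sdot V a (x(u:=t)) = sdot V a x" using assms(2) unfolding sdot_def by (intro sum.cong) auto
  then show ?thesis using assms by (simp add: sdot_def)
qed

lemma fm_base:
  assumes "finite R" "\<forall>r\<in>R. supp {w} (fst r)"
    and imp: "\<forall>x. sat {w} R x \<longrightarrow> x w \<le> d"
  shows "(\<exists>b'<0. ((\<lambda>v. 0), b') \<in> rcone R) \<or> (\<exists>d'\<le>d. ((\<lambda>v. if v = w then 1 else 0), d') \<in> rcone R)"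
proof -
  have fz: "fst r v = 0" if "r \<in> R" "v \<noteq> w" for r v using assms(2) that unfolding supp_def by auto
  have satc: "sat {w} R (\<lambda>_. t)" if "\<forall>r\<in>R. fst r w * t \<le> snd r" for t
    using that by (simp add: sat_def sdot_single)
  show ?thesis
  proof (cases "\<exists>r\<in>R. fst r w = 0 \<and> snd r < 0")
    case True
    then obtain r where r: "r \<in> R" "fst r w = 0" "snd r < 0" by blast
    have "r = ((\<lambda>v. 0), snd r)"
    proof (rule row_eqI)
      fix v show "fst r v = fst ((\<lambda>v. 0::real), snd r) v" using r fz[of r v] by (cases "v = w") auto
    qed simp
    then have "((\<lambda>v. 0), snd r) \<in> rcone R" using r(1) rcone.base by metis
    then show ?thesis using r(3) by blast
  next
    case A: False
    define Rp where "Rp = {r\<in>R. fst r w > 0}"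
    define Rm where "Rm = {r\<in>R. fst r w < 0}"
    show ?thesis
    proof (cases "\<exists>p\<in>Rp. \<exists>m\<in>Rm. snd p / fst p w < snd m / fst m w")
      case True
      then obtain p m where pm: "p \<in> R" "m \<in> R" "fst p w > 0" "fst m w < 0" "snd p / fst p w < snd m / fst m w"
        unfolding Rp_def Rm_def by blast
      define q where "q = radd (rscale (1 / fst p w) p) (rscale (-1 / fst m w) m)"
      have "q \<in> rcone R" unfolding q_def using pm by (intro rcone.add rcone.scale rcone.base) auto
      moreover have "q = ((\<lambda>v. 0), snd q)"
      proof (rule row_eqI)
        fix v show "fst q v = fst ((\<lambda>v. 0::real), snd q) v"
          using pm fz[of p v] fz[of m v] by (cases "v = w") (auto simp: q_def)
      qed simp
      moreover have "snd q < 0" using pm by (simp add: q_def)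
      ultimately show ?thesis by metis
    next
      case False
      have LU: "\<forall>p\<in>Rp. \<forall>m\<in>Rm. snd m / fst m w \<le> snd p / fst p w"
      proof (intro ballI)
        fix p m assume "p \<in> Rp" "m \<in> Rm"
        then have "\<not> (snd p / fst p w < snd m / fst m w)" using False by blast
        then show "snd m / fst m w \<le> snd p / fst p w" by linarith
      qed
      have fin: "finite Rp" "finite Rm" using assms(1) by (auto simp: Rp_def Rm_def)
      have feas: "\<forall>r\<in>R. fst r w * t \<le> snd r" if tp: "\<forall>p\<in>Rp. t \<le> snd p / fst p w" and tm: "\<forall>m\<in>Rm. snd m / fst m w \<le> t" for t
      proof
        fix r assume r: "r \<in> R"
        consider "fst r w > 0" | "fst r w < 0" | "fst r w = 0" by linarith
        then show "fst r w * t \<le> snd r"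
        proof cases
          case 1 then have "t \<le> snd r / fst r w" using tp r by (auto simp: Rp_def)
          then show ?thesis using 1 by (simp add: le_divide_eq mult.commute)
        next
          case 2 then have "snd r / fst r w \<le> t" using tm r by (auto simp: Rm_def)
          then show ?thesis using 2 by (simp add: divide_le_eq mult.commute)
        next
          case 3 then show ?thesis using A r by auto
        qed
      qed
      show ?thesis
      proof (cases "Rp = {}")
        case True
        define t where "t = \<bar>d\<bar> + 1 + (\<Sum>m\<in>Rm. \<bar>snd m / fst m w\<bar>)"
        have "\<forall>m\<in>Rm. snd m / fst m w \<le> t"
        proof
          fix m assume "m \<in> Rm"
          then have "\<bar>snd m / fst m w\<bar> \<le> (\<Sum>m\<in>Rm. \<bar>snd m / fst m w\<bar>)" using fin by (intro member_le_sum) auto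
          then show "snd m / fst m w \<le> t" unfolding t_def by linarith
        qed
        then have "sat {w} R (\<lambda>_. t)" using True by (intro satc feas) auto
        then have "t \<le> d" using imp by fastforce
        moreover have "0 \<le> (\<Sum>m\<in>Rm. \<bar>snd m / fst m w\<bar>)" by (intro sum_nonneg) auto
        ultimately show ?thesis unfolding t_def by linarith
      next
        case False
        have "Min ((\<lambda>p. snd p / fst p w) ` Rp) \<in> (\<lambda>p. snd p / fst p w) ` Rp" using False fin by (intro Min_in) auto
        then obtain p0 where p0: "p0 \<in> Rp" "Min ((\<lambda>p. snd p / fst p w) ` Rp) = snd p0 / fst p0 w" by auto
        have "\<forall>p\<in>Rp. snd p0 / fst p0 w \<le> snd p / fst p w"
        proof
          fix p assume "p \<in> Rp"
          then have "Min ((\<lambda>p. snd p / fst p w) ` Rp) \<le> snd p / fst p w" using fin by (intro Min_le) auto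
          then show "snd p0 / fst p0 w \<le> snd p / fst p w" using p0 by simp
        qed
        moreover have "\<forall>m\<in>Rm. snd m / fst m w \<le> snd p0 / fst p0 w" using LU p0 by auto
        ultimately have "sat {w} R (\<lambda>_. snd p0 / fst p0 w)" by (intro satc feas)
        then have "snd p0 / fst p0 w \<le> d" using imp by fastforce
        moreover have "rscale (1 / fst p0 w) p0 \<in> rcone R" using p0 by (intro rcone.scale rcone.base) (auto simp: Rp_def)
        moreover have "rscale (1 / fst p0 w) p0 = ((\<lambda>v. if v = w then 1 else 0), snd p0 / fst p0 w)"
          using p0 fz by (intro row_eqI) (auto simp: Rp_def)
        ultimately show ?thesis by metis
      qed
    qed
  qed
qed

lemma fm_core:
  fixes w :: 'v and R :: "(('v \<Rightarrow> real) \<times> real) set"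
  assumes "finite V"
  shows "w \<notin> V \<Longrightarrow> finite R \<Longrightarrow> \<forall>r\<in>R. supp (insert w V) (fst r) \<Longrightarrow>
     \<forall>x. sat (insert w V) R x \<longrightarrow> x w \<le> d \<Longrightarrow>
     (\<exists>b'<0. ((\<lambda>v. 0), b') \<in> rcone R) \<or> (\<exists>d'\<le>d. ((\<lambda>v. if v = w then 1 else 0), d') \<in> rcone R)"
  using assms
proof (induction V arbitrary: R rule: finite_induct)
  case empty
  then show ?case using fm_base[of R w d] by simp
next
  case (insert u V0)
  have uw: "u \<noteq> w" "w \<notin> V0" using insert.prems by auto
  define R0 where "R0 = {r\<in>R. fst r u = 0}"
  define Rp where "Rp = {r\<in>R. fst r u > 0}"
  define Rm where "Rm = {r\<in>R. fst r u < 0}"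
  define comb where "comb = (\<lambda>(p, m). radd (rscale (1 / fst p u) p) (rscale (-1 / fst m u) m))"
  define R' where "R' = R0 \<union> comb ` (Rp \<times> Rm)"
  have fin: "finite R0" "finite Rp" "finite Rm" using insert.prems by (auto simp: R0_def Rp_def Rm_def)
  have finR': "finite R'" using fin by (simp add: R'_def)
  have R'c: "R' \<subseteq> rcone R"
  proof
    fix r assume "r \<in> R'"
    then consider "r \<in> R0" | p m where "p \<in> Rp" "m \<in> Rm" "r = comb (p,m)" unfolding R'_def by auto
    then show "r \<in> rcone R"
    proof cases
      case 1 then show ?thesis by (auto simp: R0_def intro: rcone.base)
    next
      case 2 then show ?thesis unfolding comb_def Rp_def Rm_def
        by (simp, intro rcone.add rcone.scale rcone.base) auto
    qed
  qed
  have suppR': "\<forall>r\<in>R'. supp (insert w V0) (fst r)"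
  proof
    fix r assume "r \<in> R'"
    then consider "r \<in> R0" | p m where "p \<in> Rp" "m \<in> Rm" "r = comb (p, m)" unfolding R'_def by auto
    then show "supp (insert w V0) (fst r)"
    proof cases
      case 1 then show ?thesis using insert.prems(3) unfolding R0_def supp_def by auto
    next
      case 2
      have "fst p v = 0" "fst m v = 0" if "v \<notin> insert w (insert u V0)" for v
        using insert.prems(3) 2 that unfolding Rp_def Rm_def supp_def by auto
      moreover have "fst p u \<noteq> 0" "fst m u \<noteq> 0" using 2 by (auto simp: Rp_def Rm_def)
      ultimately show ?thesis using 2 unfolding supp_def
      proof (intro allI impI)
        fix v assume v: "v \<notin> insert w V0"
        show "fst r v = 0"
        proof (cases "v = u")
          case True then show ?thesis using 2 \<open>fst p u \<noteq> 0\<close> \<open>fst m u \<noteq> 0\<close> by (simp add: comb_def)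
        next
          case False then show ?thesis using 2 v \<open>\<And>v. v \<notin> insert w (insert u V0) \<Longrightarrow> fst p v = 0\<close>
             \<open>\<And>v. v \<notin> insert w (insert u V0) \<Longrightarrow> fst m v = 0\<close> by (simp add: comb_def)
        qed
      qed
    qed
  qed
  have impR': "\<forall>x. sat (insert w V0) R' x \<longrightarrow> x w \<le> d"
  proof (intro allI impI)
    fix x assume sx: "sat (insert w V0) R' x"
    define rest where "rest r = sdot (insert w V0) (fst r) x" for r :: "('v \<Rightarrow> real) \<times> real"
    have r0: "rest r \<le> snd r" if "r \<in> R0" for r using sx that unfolding sat_def rest_def R'_def by auto
    have pm: "(snd m - rest m) / fst m u \<le> (snd p - rest p) / fst p u" if "p \<in> Rp" "m \<in> Rm" for p m
    proof -
      have "comb (p, m) \<in> R'" using that by (auto simp: R'_def)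
      then have "sdot (insert w V0) (fst (comb (p,m))) x \<le> snd (comb (p,m))" using sx by (auto simp: sat_def)
      moreover have "sdot (insert w V0) (fst (comb (p,m))) x = (1 / fst p u) * rest p + (-1 / fst m u) * rest m"
        unfolding comb_def rest_def radd_def rscale_def by (simp only: case_prod_conv fst_conv sdot_lin)
      moreover have "snd (comb (p,m)) = (1 / fst p u) * snd p + (-1 / fst m u) * snd m" by (simp add: comb_def)
      ultimately have "(1 / fst p u) * rest p + (-1 / fst m u) * rest m \<le> (1 / fst p u) * snd p + (-1 / fst m u) * snd m" by simp
      then show ?thesis by (simp add: diff_divide_distrib)
    qed
    obtain t where t: "\<forall>p\<in>Rp. t \<le> (snd p - rest p) / fst p u" "\<forall>m\<in>Rm. (snd m - rest m) / fst m u \<le> t"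
      using choose_t[OF fin(2) fin(3), of "\<lambda>m. (snd m - rest m) / fst m u" "\<lambda>p. (snd p - rest p) / fst p u"] pm by blast
    have "sat (insert w (insert u V0)) R (x(u := t))"
      unfolding sat_def
    proof
      fix r assume r: "r \<in> R"
      have eq: "sdot (insert w (insert u V0)) (fst r) (x(u := t)) = fst r u * t + rest r"
        unfolding rest_def using sdot_upd[of "insert w V0" u "fst r" x t] insert.hyps uw by (simp add: insert_commute)
      consider "fst r u > 0" | "fst r u < 0" | "fst r u = 0" by linarith
      then show "sdot (insert w (insert u V0)) (fst r) (x(u := t)) \<le> snd r"
      proof cases
        case 1 then have "r \<in> Rp" using r by (simp add: Rp_def)
        then have "t \<le> (snd r - rest r) / fst r u" using t(1) by blast
        then show ?thesis using 1 eq by (simp add: le_divide_eq mult.commute)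
      next
        case 2 then have "r \<in> Rm" using r by (simp add: Rm_def)
        then have "(snd r - rest r) / fst r u \<le> t" using t(2) by blast
        then show ?thesis using 2 eq by (simp add: divide_le_eq mult.commute)
      next
        case 3 then show ?thesis using eq r0 r by (auto simp: R0_def)
      qed
    qed
    then have "(x(u := t)) w \<le> d" using insert.prems(4) by blast
    then show "x w \<le> d" using uw by simp
  qed
  have "(\<exists>b'<0. ((\<lambda>v. 0), b') \<in> rcone R') \<or> (\<exists>d'\<le>d. ((\<lambda>v. if v = w then 1 else 0), d') \<in> rcone R')"
    using insert.IH[OF uw(2) finR' suppR' impR'] .
  then show ?case using rcone_trans[OF R'c] by blast
qed



lemma farkas:
  fixes w :: 'v and R :: "(('v \<Rightarrow> real) \<times> real) set"
  assumes "finite V" "w \<notin> V" "finite R" "\<forall>r\<in>R. supp V (fst r)" "supp V c"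
    and imp: "\<forall>x. sat V R x \<longrightarrow> sdot V c x \<le> d"
  shows "(\<exists>b'<0. ((\<lambda>v. 0), b') \<in> rcone R) \<or> (\<exists>d'\<le>d. (c, d') \<in> rcone R)"
proof -
  define q where "q = ((\<lambda>v. if v = w then -1 else c v), 0::real)"
  define R2 where "R2 = insert q (insert (rscale (-1) q) R)"
  have cw: "c w = 0" using assms(2,5) by (auto simp: supp_def)
  have rw: "\<forall>r\<in>R. fst r w = 0" using assms(2,4) by (auto simp: supp_def)
  have sdw: "sdot (insert w V) a x = a w * x w + sdot V a x" for a x using assms(1,2) by (simp add: sdot_def)
  have sq: "sdot V (fst q) x = sdot V c x" for x
    using assms(2) unfolding q_def sdot_def by (intro sum.cong) auto
  have main: "(\<exists>b'<0. ((\<lambda>v. 0), b') \<in> rcone R2) \<or> (\<exists>d'\<le>d. ((\<lambda>v. if v = w then 1 else 0), d') \<in> rcone R2)"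
  proof (rule fm_core[OF assms(1,2)])
    show "finite R2" using assms(3) by (simp add: R2_def)
    have s1: "supp (insert w V) (fst q)" using assms(5) by (simp add: supp_def q_def)
    then have s2: "supp (insert w V) (fst (rscale (-1) q))" by (simp add: supp_def)
    have s3: "\<forall>r\<in>R. supp (insert w V) (fst r)" using assms(4) by (simp add: supp_def)
    show "\<forall>r\<in>R2. supp (insert w V) (fst r)" unfolding R2_def using s1 s2 s3 by blast
    show "\<forall>x. sat (insert w V) R2 x \<longrightarrow> x w \<le> d"
    proof (intro allI impI)
      fix x assume sx: "sat (insert w V) R2 x"
      have sq0: "snd q = 0" by (simp add: q_def)
      have "sdot (insert w V) (fst q) x \<le> snd q" using sx unfolding sat_def R2_def by blast
      moreover have "sdot (insert w V) (fst (rscale (-1) q)) x \<le> snd (rscale (-1) q)" using sx unfolding sat_def R2_def by blast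
      moreover have "sdot (insert w V) (fst (rscale (-1) q)) x = - sdot (insert w V) (fst q) x"
        by (simp add: sdot_def sum_negf)
      ultimately have e: "sdot (insert w V) (fst q) x = 0" using sq0 by simp
      have "sdot (insert w V) (fst q) x = - x w + sdot V c x" using sdw[of "fst q" x] sq[of x] by (simp add: q_def)
      then have "x w = sdot V c x" using e by linarith
      moreover have "sat V R x"
        unfolding sat_def
      proof
        fix r assume r: "r \<in> R"
        then have "sdot (insert w V) (fst r) x \<le> snd r" using sx unfolding sat_def R2_def by blast
        then show "sdot V (fst r) x \<le> snd r" using sdw[of "fst r" x] rw r by simp
      qed
      ultimately show "x w \<le> d" using imp by auto
    qed
  qed
  have dec: "\<exists>lam r2. r2 \<in> rcone R \<and> (\<forall>v. fst r v = fst r2 v + lam * fst q v) \<and> snd r = snd r2"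
    if rr: "r \<in> rcone R2" for r
  proof -
    have "snd q = 0" by (simp add: q_def)
    obtain l1 r1 where 1: "r1 \<in> rcone (insert (rscale (-1) q) R)" "r = radd r1 (rscale l1 q)"
      using rcone_insert[OF rr[unfolded R2_def]] by blast
    obtain l2 r2 where 2: "r2 \<in> rcone R" "r1 = radd r2 (rscale l2 (rscale (-1) q))"
      using rcone_insert[OF 1(1)] by blast
    show ?thesis
      apply (rule exI[of _ "l1 - l2"], rule exI[of _ r2])
      using 2(1) \<open>snd q = 0\<close> by (simp add: 1 2 algebra_simps)
  qed
  from main show ?thesis
  proof (elim disjE exE conjE)
    fix b' assume b': "b' < 0" "((\<lambda>v. 0), b') \<in> rcone R2"
    from dec[OF b'(2)] obtain lam r2 where r2: "r2 \<in> rcone R" "\<forall>v. 0 = fst r2 v + lam * fst q v"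
      "b' = snd r2" by auto
    have "fst r2 w = 0" using rcone_coord0[OF rw r2(1)] .
    moreover have "fst q w = -1" by (simp add: q_def)
    ultimately have "lam = 0" using r2(2)[rule_format, of w] by simp
    then have "r2 = ((\<lambda>v. 0), b')" using r2(2,3) by (intro row_eqI) simp_all
    then have "((\<lambda>v. 0), b') \<in> rcone R" using r2(1) by simp
    then show ?thesis using b'(1) by blast
  next
    fix d' assume d': "d' \<le> d" "((\<lambda>v. if v = w then 1 else 0), d') \<in> rcone R2"
    from dec[OF d'(2)] obtain lam r2 where r2: "r2 \<in> rcone R" "\<forall>v. fst ((\<lambda>v. if v = w then 1 else 0::real), d') v = fst r2 v + lam * fst q v"
      "snd ((\<lambda>v. if v = w then 1 else 0::real), d') = snd r2" by (elim exE conjE) (rule that)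
    have "fst r2 w = 0" using rcone_coord0[OF rw r2(1)] .
    moreover have "fst q w = -1" by (simp add: q_def)
    ultimately have "lam = -1" using r2(2)[rule_format, of w] by simp
    have "r2 = (c, d')"
    proof (rule row_eqI)
      fix v show "fst r2 v = fst (c, d') v"
        using r2(2)[rule_format, of v] \<open>lam = -1\<close> \<open>fst r2 w = 0\<close> cw by (cases "v = w") (simp_all add: q_def)
    qed (use r2(3) in simp)
    then have "(c, d') \<in> rcone R" using r2(1) by simp
    then show ?thesis using d'(1) by blast
  qed
qed



definition lsum :: "nat \<Rightarrow> (nat \<Rightarrow> nat \<Rightarrow> real) \<Rightarrow> (nat \<Rightarrow> nat \<Rightarrow> real) \<Rightarrow> real" where
  "lsum n C P = (\<Sum>i\<in>{1..n}. \<Sum>k\<in>{1..n}. C i k * P i k)"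

lemma lsum_add: "lsum n (\<lambda>i k. C i k + D i k) P = lsum n C P + lsum n D P"
  by (simp add: lsum_def sum.distrib algebra_simps)
lemma lsum_scale: "lsum n (\<lambda>i k. c * C i k) P = c * lsum n C P"
  by (simp add: lsum_def sum_distrib_left algebra_simps)
lemma lsum_scale_r: "lsum n (\<lambda>i k. C i k * c) P = c * lsum n C P"
  by (simp add: lsum_def sum_distrib_left algebra_simps)
lemma lsum_zero: "lsum n (\<lambda>i k. 0) P = 0"
  by (simp add: lsum_def)

definition aff :: "nat \<Rightarrow> ((nat \<Rightarrow> nat \<Rightarrow> real) \<Rightarrow> real) \<Rightarrow> bool" where
  "aff n F = (\<exists>c0 C. \<forall>P. F P = c0 + lsum n C P)"

lemma aff_const: "aff n (\<lambda>P. c)"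
  unfolding aff_def by (rule exI[of _ c], rule exI[of _ "\<lambda>i k. 0"]) (simp add: lsum_zero)

lemma dsum2: assumes "finite A" "finite B"
  shows "(\<Sum>ia\<in>A. \<Sum>ka\<in>B. if ia = i \<and> ka = k then F ia ka else 0) = (if i \<in> A \<and> k \<in> B then F i k else (0::real))"
proof -
  have "(\<Sum>ka\<in>B. if ia = i \<and> ka = k then F ia ka else 0) = (if ia = i \<and> k \<in> B then F ia k else 0)" for ia
    using assms by (cases "ia = i") (simp_all add: sum.delta)
  then show ?thesis using assms by (cases "k \<in> B") (simp_all add: sum.delta)
qed

lemma aff_coord: assumes "i \<in> {1..n}" "k \<in> {1..n}" shows "aff n (\<lambda>P. P i k)"
proof -
  have inner: "(\<Sum>k'\<in>{1..n}. if i' = i \<and> k' = k then c else 0) = (if i' = i then c else 0)" for i' and c :: real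
    using assms(2) by (cases "i' = i") (simp_all add: sum.delta)
  have "lsum n (\<lambda>i' k'. if i' = i \<and> k' = k then 1 else 0) P = P i k" for P
    using assms by (simp add: lsum_def if01_mult dsum2)
  then show ?thesis unfolding aff_def by (intro exI[of _ 0] exI[of _ "\<lambda>i' k'. if i' = i \<and> k' = k then 1 else 0"]) simp
qed

lemma aff_add: "aff n F \<Longrightarrow> aff n G \<Longrightarrow> aff n (\<lambda>P. F P + G P)"
  unfolding aff_def
proof (elim exE)
  fix c1 C1 c2 C2 assume "\<forall>P. F P = c1 + lsum n C1 P" "\<forall>P. G P = c2 + lsum n C2 P"
  then show "\<exists>c0 C. \<forall>P. F P + G P = c0 + lsum n C P"
    by (intro exI[of _ "c1 + c2"] exI[of _ "\<lambda>i k. C1 i k + C2 i k"]) (simp add: lsum_add)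
qed

lemma aff_scale: "aff n F \<Longrightarrow> aff n (\<lambda>P. c * F P)"
  unfolding aff_def
proof (elim exE)
  fix c1 C1 assume "\<forall>P. F P = c1 + lsum n C1 P"
  then show "\<exists>c0 C. \<forall>P. c * F P = c0 + lsum n C P"
    by (intro exI[of _ "c * c1"] exI[of _ "\<lambda>i k. c * C1 i k"]) (simp add: lsum_scale algebra_simps)
qed

lemma aff_scale_r: "aff n F \<Longrightarrow> aff n (\<lambda>P. F P * c)"
  using aff_scale[of n F c] by (simp add: mult.commute)

lemma aff_diff: "aff n F \<Longrightarrow> aff n G \<Longrightarrow> aff n (\<lambda>P. F P - G P)"
  using aff_add[of n F "\<lambda>P. (-1) * G P"] aff_scale[of n G "-1"] by simp

lemma aff_sum: "finite S \<Longrightarrow> (\<And>s. s \<in> S \<Longrightarrow> aff n (F s)) \<Longrightarrow> aff n (\<lambda>P. \<Sum>s\<in>S. F s P)"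
proof (induction S rule: finite_induct)
  case empty then show ?case by (simp add: aff_const)
next
  case (insert x S) then show ?case by (simp add: aff_add)
qed

definition biaff :: "nat \<Rightarrow> ((nat \<Rightarrow> nat \<Rightarrow> real) \<Rightarrow> (nat \<Rightarrow> nat \<Rightarrow> real) \<Rightarrow> real) \<Rightarrow> bool" where
  "biaff n H = (\<exists>K0 K1 L0 L. \<forall>Q P. H Q P = K0 + lsum n K1 Q + lsum n (\<lambda>i k. L0 i k + lsum n (L i k) Q) P)"

lemma biaff_zero: "biaff n (\<lambda>Q P. 0)"
  unfolding biaff_def
  by (intro exI[of _ 0] exI[of _ "\<lambda>i k. 0"] exI[of _ "\<lambda>i k j l. 0"]) (simp add: lsum_zero)

lemma biaff_add: "biaff n F \<Longrightarrow> biaff n G \<Longrightarrow> biaff n (\<lambda>Q P. F Q P + G Q P)"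
  unfolding biaff_def
proof (elim exE)
  fix a1 A1 B1 C1 a2 A2 B2 C2
  assume "\<forall>Q P. F Q P = a1 + lsum n A1 Q + lsum n (\<lambda>i k. B1 i k + lsum n (C1 i k) Q) P"
     "\<forall>Q P. G Q P = a2 + lsum n A2 Q + lsum n (\<lambda>i k. B2 i k + lsum n (C2 i k) Q) P"
  then show "\<exists>K0 K1 L0 L. \<forall>Q P. F Q P + G Q P = K0 + lsum n K1 Q + lsum n (\<lambda>i k. L0 i k + lsum n (L i k) Q) P"
    by (intro exI[of _ "a1 + a2"] exI[of _ "\<lambda>i k. A1 i k + A2 i k"] exI[of _ "\<lambda>i k. B1 i k + B2 i k"]
        exI[of _ "\<lambda>i k j l. C1 i k j l + C2 i k j l"]) (simp add: lsum_add algebra_simps)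
qed

lemma biaff_scale: "biaff n F \<Longrightarrow> biaff n (\<lambda>Q P. c * F Q P)"
  unfolding biaff_def
proof (elim exE)
  fix a1 A1 B1 C1
  assume "\<forall>Q P. F Q P = a1 + lsum n A1 Q + lsum n (\<lambda>i k. B1 i k + lsum n (C1 i k) Q) P"
  then show "\<exists>K0 K1 L0 L. \<forall>Q P. c * F Q P = K0 + lsum n K1 Q + lsum n (\<lambda>i k. L0 i k + lsum n (L i k) Q) P"
    by (intro exI[of _ "c * a1"] exI[of _ "\<lambda>i k. c * A1 i k"] exI[of _ "\<lambda>i k. c * B1 i k"]
        exI[of _ "\<lambda>i k j l. c * C1 i k j l"]) (simp add: lsum_scale lsum_add algebra_simps)
qed

lemma biaff_sum: "finite S \<Longrightarrow> (\<And>s. s \<in> S \<Longrightarrow> biaff n (F s)) \<Longrightarrow> biaff n (\<lambda>Q P. \<Sum>s\<in>S. F s Q P)"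
proof (induction S rule: finite_induct)
  case empty then show ?case by (simp add: biaff_zero)
next
  case (insert x S) then show ?case by (simp add: biaff_add)
qed

lemma biaff_prod: "aff n A \<Longrightarrow> aff n B \<Longrightarrow> biaff n (\<lambda>Q P. B P * A Q)"
  unfolding aff_def biaff_def
proof (elim exE)
  fix a0 CA b0 CB
  assume A: "\<forall>Q. A Q = a0 + lsum n CA Q" and B: "\<forall>P. B P = b0 + lsum n CB P"
  have "lsum n (\<lambda>i k. a0 * CB i k + lsum n (\<lambda>j l. CB i k * CA j l) Q) P
        = a0 * lsum n CB P + lsum n CA Q * lsum n CB P" for Q P
  proof -
    have "lsum n (\<lambda>j l. CB i k * CA j l) Q = CB i k * lsum n CA Q" for i k
      by (rule lsum_scale)
    then have "lsum n (\<lambda>i k. a0 * CB i k + lsum n (\<lambda>j l. CB i k * CA j l) Q) P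
        = lsum n (\<lambda>i k. a0 * CB i k + CB i k * lsum n CA Q) P" by simp
    also have "\<dots> = a0 * lsum n CB P + lsum n CA Q * lsum n CB P"
      by (simp add: lsum_add lsum_scale lsum_scale_r)
    finally show ?thesis .
  qed
  then show "\<exists>K0 K1 L0 L. \<forall>Q P. B P * A Q = K0 + lsum n K1 Q + lsum n (\<lambda>i k. L0 i k + lsum n (L i k) Q) P"
    using A B
    by (intro exI[of _ "a0 * b0"] exI[of _ "\<lambda>i k. b0 * CA i k"] exI[of _ "\<lambda>i k. a0 * CB i k"]
        exI[of _ "\<lambda>i k j l. CB i k * CA j l"]) (simp add: lsum_scale algebra_simps)
qed

lemma aff_pv1: assumes "i \<in> {1..n}" "k \<le> n" shows "aff n (\<lambda>P. pv1 P k i)"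
proof (cases "k = 0")
  case True then show ?thesis by (simp add: pv1_def aff_const)
next
  case False then show ?thesis using assms by (simp add: pv1_def aff_coord)
qed

lemma aff_rr: assumes "k \<le> n" shows "aff n (\<lambda>P. rr n P k)"
proof (cases "k = 0")
  case True
  have "aff n (\<lambda>P. 1 - (\<Sum>k'\<in>{1..n}. (1 / real k') * (\<Sum>i\<in>{1..n}. P i k')))"
    by (intro aff_diff aff_const aff_sum aff_scale aff_coord) auto
  then show ?thesis using True by (simp add: rr_def)
next
  case False
  have "aff n (\<lambda>P. (1 / real k) * (\<Sum>i\<in>{1..n}. P i k))"
    using False assms by (intro aff_scale aff_sum aff_coord) auto
  then show ?thesis using False by (simp add: rr_def)
qed

lemma aff_pv0: assumes "i \<in> {1..n}" "k \<le> n" shows "aff n (\<lambda>P. pv0 n P k i)"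
  unfolding pv0_def using assms by (intro aff_diff aff_rr aff_pv1)

lemma biaff_O0:
  fixes J :: "nat \<Rightarrow> nat" and a b :: "nat \<Rightarrow> nat \<Rightarrow> real" and f g :: "nat \<Rightarrow> nat \<Rightarrow> nat \<Rightarrow> nat \<Rightarrow> real"
  shows "biaff n (\<lambda>Q P. O0 n a b f g J Q P)"
proof -
  have "biaff n (\<lambda>Q P. \<Sum>k\<in>{0..n}. \<Sum>l\<in>{0..n}. \<Sum>j<J 0.
        (1 / g 0 j k l) * (a 0 j * (\<Sum>i\<in>{1..n}. pv1 P k i * pv1 Q l i)
                          + b 0 j * (\<Sum>i\<in>{1..n}. pv0 n P k i * pv0 n Q l i)
                          + f 0 j k l * (rr n P k * rr n Q l)))"
    by (intro biaff_sum biaff_scale biaff_add biaff_prod aff_pv1 aff_pv0 aff_rr) auto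
  then show ?thesis unfolding O0_def dotv_def by (simp add: mult.assoc)
qed

lemma aff_Gam:
  fixes J :: "nat \<Rightarrow> nat" and a b :: "nat \<Rightarrow> nat \<Rightarrow> real" and f g :: "nat \<Rightarrow> nat \<Rightarrow> nat \<Rightarrow> nat \<Rightarrow> real"
    and i L :: nat and y :: "nat \<Rightarrow> nat"
  shows "aff n (\<lambda>P. \<Sum>k\<in>{0..n}. \<Sum>j<J i.
        (1 / g i j k L) * (a i j * dotv n (pv1 P k) (\<lambda>s. real (y s))
           + b i j * dotv n (pv0 n P k) (\<lambda>s. 1 - real (y s))
           + f i j k L * rr n P k))"
  unfolding dotv_def
  by (intro aff_sum aff_scale aff_add aff_scale_r aff_pv1 aff_pv0 aff_rr) simp_all



definition dfeas :: "nat \<Rightarrow> nat \<Rightarrow> (nat \<Rightarrow> nat \<Rightarrow> real) \<Rightarrow> (nat \<Rightarrow> nat \<Rightarrow> nat \<Rightarrow> real)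
   \<Rightarrow> (nat \<Rightarrow> nat \<Rightarrow> real) \<Rightarrow> (nat \<Rightarrow> real) \<Rightarrow> real \<Rightarrow> bool" where
  "dfeas n t W A \<alpha> \<beta> v = ((\<forall>i\<in>{1..n}. \<forall>k\<in>{1..n}. 0 \<le> \<alpha> i k) \<and> (\<forall>l\<in>{1..t}. 0 \<le> \<beta> l) \<and> 0 \<le> v
      \<and> (\<forall>i\<in>{1..n}. \<forall>k\<in>{1..n}. v \<ge> real k * W i k - \<alpha> i k + (1 / real k) * (\<Sum>j\<in>{1..n}. \<alpha> j k)
            + (\<Sum>l\<in>{1..t}. \<beta> l * (real k * A l i k))))"

lemma weak_duality:
  assumes P: "P \<in> Delta n" and G: "\<forall>l\<in>{1..t}. \<tau> l \<le> \<mu> l + lsum n (A l) P"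
    and F: "dfeas n t W A \<alpha> \<beta> v"
  shows "lsum n W P \<le> v + (\<Sum>l\<in>{1..t}. \<beta> l * (\<mu> l - \<tau> l))"
proof -
  define s where "s k = (\<Sum>j\<in>{1..n}. \<alpha> j k)" for k
  define c where "c k = (1 / real k) * (\<Sum>j\<in>{1..n}. P j k)" for k
  have P0: "0 \<le> P i k" "P i k \<le> c k" if "i \<in> {1..n}" "k \<in> {1..n}" for i k
    using P that by (auto simp: Delta_def c_def)
  have P1: "(\<Sum>k\<in>{1..n}. c k) \<le> 1" using P by (auto simp: Delta_def c_def)
  have al: "0 \<le> \<alpha> i k" if "i \<in> {1..n}" "k \<in> {1..n}" for i k using F that by (auto simp: dfeas_def)
  have be: "0 \<le> \<beta> l" if "l \<in> {1..t}" for l using F that by (auto simp: dfeas_def)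
  have v0: "0 \<le> v" using F by (auto simp: dfeas_def)
  have per: "W i k * P i k \<le> v * (P i k / real k) + (\<alpha> i k * P i k - s k * P i k / real k) / real k
      - P i k * (\<Sum>l\<in>{1..t}. \<beta> l * A l i k)" if i: "i \<in> {1..n}" and k: "k \<in> {1..n}" for i k
  proof -
    have kp: "real k > 0" using k by auto
    have "real k * W i k \<le> v + \<alpha> i k - s k / real k - real k * (\<Sum>l\<in>{1..t}. \<beta> l * A l i k)"
    proof -
      have "v \<ge> real k * W i k - \<alpha> i k + (1 / real k) * (\<Sum>j\<in>{1..n}. \<alpha> j k)
            + (\<Sum>l\<in>{1..t}. \<beta> l * (real k * A l i k))" using F i k by (simp add: dfeas_def)
      moreover have "(\<Sum>l\<in>{1..t}. \<beta> l * (real k * A l i k)) = real k * (\<Sum>l\<in>{1..t}. \<beta> l * A l i k)"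
        by (simp add: sum_distrib_left algebra_simps)
      moreover have "(1 / real k) * (\<Sum>j\<in>{1..n}. \<alpha> j k) = s k / real k" by (simp add: s_def)
      ultimately show ?thesis by linarith
    qed
    then have "W i k \<le> (v + \<alpha> i k - s k / real k) / real k - (\<Sum>l\<in>{1..t}. \<beta> l * A l i k)"
      using kp by (simp add: field_simps)
    then have "W i k * P i k \<le> ((v + \<alpha> i k - s k / real k) / real k - (\<Sum>l\<in>{1..t}. \<beta> l * A l i k)) * P i k"
      using P0[OF i k] by (intro mult_right_mono) auto
    then show ?thesis using kp by (simp add: field_simps)
  qed
  have "lsum n W P \<le> (\<Sum>i\<in>{1..n}. \<Sum>k\<in>{1..n}. v * (P i k / real k) + (\<alpha> i k * P i k - s k * P i k / real k) / real k
      - P i k * (\<Sum>l\<in>{1..t}. \<beta> l * A l i k))"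
    unfolding lsum_def by (intro sum_mono per) auto
  also have "\<dots> = (\<Sum>i\<in>{1..n}. \<Sum>k\<in>{1..n}. v * (P i k / real k))
      + (\<Sum>i\<in>{1..n}. \<Sum>k\<in>{1..n}. (\<alpha> i k * P i k - s k * P i k / real k) / real k)
      - (\<Sum>i\<in>{1..n}. \<Sum>k\<in>{1..n}. P i k * (\<Sum>l\<in>{1..t}. \<beta> l * A l i k))"
    by (simp add: sum.distrib sum_subtractf)
  also have "(\<Sum>i\<in>{1..n}. \<Sum>k\<in>{1..n}. v * (P i k / real k)) = v * (\<Sum>k\<in>{1..n}. c k)"
    by (subst sum.swap) (simp add: c_def sum_distrib_left sum_divide_distrib algebra_simps)
  also have "(\<Sum>i\<in>{1..n}. \<Sum>k\<in>{1..n}. P i k * (\<Sum>l\<in>{1..t}. \<beta> l * A l i k))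
      = (\<Sum>l\<in>{1..t}. \<beta> l * lsum n (A l) P)"
  proof -
    have "(\<Sum>i\<in>{1..n}. \<Sum>k\<in>{1..n}. P i k * (\<Sum>l\<in>{1..t}. \<beta> l * A l i k))
       = (\<Sum>i\<in>{1..n}. \<Sum>k\<in>{1..n}. \<Sum>l\<in>{1..t}. \<beta> l * (A l i k * P i k))"
      by (simp add: sum_distrib_left algebra_simps)
    also have "\<dots> = (\<Sum>i\<in>{1..n}. \<Sum>l\<in>{1..t}. \<Sum>k\<in>{1..n}. \<beta> l * (A l i k * P i k))"
      by (rule sum.cong[OF refl], rule sum.swap)
    also have "\<dots> = (\<Sum>l\<in>{1..t}. \<Sum>i\<in>{1..n}. \<Sum>k\<in>{1..n}. \<beta> l * (A l i k * P i k))"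
      by (rule sum.swap)
    also have "\<dots> = (\<Sum>l\<in>{1..t}. \<beta> l * lsum n (A l) P)"
      by (simp add: lsum_def sum_distrib_left)
    finally show ?thesis .
  qed
  also have "(\<Sum>i\<in>{1..n}. \<Sum>k\<in>{1..n}. (\<alpha> i k * P i k - s k * P i k / real k) / real k) \<le> 0"
  proof -
    have "(\<Sum>i\<in>{1..n}. \<Sum>k\<in>{1..n}. (\<alpha> i k * P i k - s k * P i k / real k) / real k)
        = (\<Sum>k\<in>{1..n}. (\<Sum>i\<in>{1..n}. \<alpha> i k * (P i k - c k)) / real k)"
    proof -
      have "(\<Sum>i\<in>{1..n}. (\<alpha> i k * P i k - s k * P i k / real k)) = (\<Sum>i\<in>{1..n}. \<alpha> i k * (P i k - c k))" for k
      proof -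
        have "(\<Sum>i\<in>{1..n}. s k * P i k / real k) = (\<Sum>i\<in>{1..n}. \<alpha> i k * c k)"
        proof -
          have e1: "(\<Sum>i\<in>{1..n}. s k * P i k / real k) = s k * (\<Sum>i\<in>{1..n}. P i k) / real k"
            by (simp add: sum_distrib_left sum_divide_distrib)
          have e2: "(\<Sum>i\<in>{1..n}. \<alpha> i k * c k) = s k * c k"
            by (simp add: s_def sum_distrib_right)
          show ?thesis using e1 e2 by (simp add: c_def)
        qed
        then show ?thesis by (simp add: sum_subtractf algebra_simps)
      qed
      then show ?thesis by (subst sum.swap) (simp add: sum_divide_distrib[symmetric])
    qed
    also have "\<dots> \<le> 0"
    proof (rule sum_nonpos)
      fix k assume k: "k \<in> {1..n}"
      have "(\<Sum>i\<in>{1..n}. \<alpha> i k * (P i k - c k)) \<le> 0"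
        using al P0 k by (intro sum_nonpos mult_nonneg_nonpos) auto
      then show "(\<Sum>i\<in>{1..n}. \<alpha> i k * (P i k - c k)) / real k \<le> 0"
        by (intro divide_nonpos_nonneg) auto
    qed
    finally show ?thesis .
  qed
  finally have main: "lsum n W P \<le> v * (\<Sum>k\<in>{1..n}. c k) - (\<Sum>l\<in>{1..t}. \<beta> l * lsum n (A l) P)"
    by simp
  have "v * (\<Sum>k\<in>{1..n}. c k) \<le> v" using v0 P1 by (simp add: mult_left_le)
  moreover have "(\<Sum>l\<in>{1..t}. \<beta> l * (\<tau> l - \<mu> l)) \<le> (\<Sum>l\<in>{1..t}. \<beta> l * lsum n (A l) P)"
  proof (intro sum_mono mult_left_mono)
    fix l assume l: "l \<in> {1..t}"
    then show "\<tau> l - \<mu> l \<le> lsum n (A l) P" using G by force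
    show "0 \<le> \<beta> l" using be l by auto
  qed
  moreover have "(\<Sum>l\<in>{1..t}. \<beta> l * (\<tau> l - \<mu> l)) = - (\<Sum>l\<in>{1..t}. \<beta> l * (\<mu> l - \<tau> l))"
    by (simp add: sum_negf[symmetric] algebra_simps)
  ultimately show ?thesis using main by linarith
qed



datatype ridx = NN "nat \<times> nat" | COL "nat \<times> nat" | SM | GM nat

fun hrow :: "nat \<Rightarrow> (nat \<Rightarrow> nat \<Rightarrow> nat \<Rightarrow> real) \<Rightarrow> (nat \<Rightarrow> real) \<Rightarrow> (nat \<Rightarrow> real) \<Rightarrow> ridx
    \<Rightarrow> ((nat \<times> nat \<Rightarrow> real) \<times> real)" where
  "hrow n A \<mu> \<tau> (NN q) = ((\<lambda>p. if p = q then -1 else 0), 0)"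
| "hrow n A \<mu> \<tau> (COL q) = ((\<lambda>p. (if p = q then 1 else 0)
      - (if snd p = snd q \<and> fst p \<in> {1..n} then 1 / real (snd q) else 0)), 0)"
| "hrow n A \<mu> \<tau> SM = ((\<lambda>p. if p \<in> {1..n} \<times> {1..n} then 1 / real (snd p) else 0), 1)"
| "hrow n A \<mu> \<tau> (GM l) = ((\<lambda>p. if p \<in> {1..n} \<times> {1..n} then - A l (fst p) (snd p) else 0), \<mu> l - \<tau> l)"

definition ridxs :: "nat \<Rightarrow> nat \<Rightarrow> ridx set" where
  "ridxs n t = NN ` ({1..n} \<times> {1..n}) \<union> COL ` ({1..n} \<times> {1..n}) \<union> {SM} \<union> GM ` {1..t}"

lemma finite_ridxs: "finite (ridxs n t)" by (simp add: ridxs_def)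

lemma sum_ridxs: "(\<Sum>r\<in>ridxs n t. G r) = (\<Sum>q\<in>{1..n} \<times> {1..n}. G (NN q)) + (\<Sum>q\<in>{1..n} \<times> {1..n}. G (COL q))
   + G SM + (\<Sum>l\<in>{1..t}. G (GM l))"
proof -
  let ?V = "{1..n} \<times> {1..n}"
  have "(\<Sum>r\<in>ridxs n t. G r) = (\<Sum>r\<in>NN ` ?V \<union> COL ` ?V \<union> {SM}. G r) + (\<Sum>r\<in>GM ` {1..t}. G r)"
    unfolding ridxs_def by (rule sum.union_disjoint) auto
  also have "(\<Sum>r\<in>NN ` ?V \<union> COL ` ?V \<union> {SM}. G r) = (\<Sum>r\<in>NN ` ?V \<union> COL ` ?V. G r) + G SM"
    by (subst sum.union_disjoint) auto
  also have "(\<Sum>r\<in>NN ` ?V \<union> COL ` ?V. G r) = (\<Sum>r\<in>NN ` ?V. G r) + (\<Sum>r\<in>COL ` ?V. G r)"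
    by (rule sum.union_disjoint) auto
  also have "(\<Sum>r\<in>NN ` ?V. G r) = (\<Sum>q\<in>?V. G (NN q))" by (rule sum.reindex_cong[of NN]) (auto simp: inj_on_def)
  also have "(\<Sum>r\<in>COL ` ?V. G r) = (\<Sum>q\<in>?V. G (COL q))" by (rule sum.reindex_cong[of COL]) (auto simp: inj_on_def)
  also have "(\<Sum>r\<in>GM ` {1..t}. G r) = (\<Sum>l\<in>{1..t}. G (GM l))" by (rule sum.reindex_cong[of GM]) (auto simp: inj_on_def)
  finally show ?thesis .
qed

lemma sumV: "(\<Sum>p\<in>{1..n} \<times> {1..n}. F p) = (\<Sum>i\<in>{1..n}. \<Sum>k\<in>{1..n}. F (i, k))"
  by (simp add: sum.cartesian_product)

lemma ifm: "(if P then a else 0) * (z::real) = (if P then a * z else 0)" by simp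
lemma ifm2: "(z::real) * (if P then a else 0) = (if P then z * a else 0)" by simp

lemma col_sum:
  fixes c :: real and F :: "nat \<times> nat \<Rightarrow> real"
  assumes "k \<in> {1..n}"
  shows "(\<Sum>p\<in>{1..n} \<times> {1..n}. (if snd p = k \<and> fst p \<in> {1..n} then c else 0) * F p)
    = c * (\<Sum>j\<in>{1..n}. F (j, k))"
proof -
  have "(\<Sum>p\<in>{1..n} \<times> {1..n}. (if snd p = k \<and> fst p \<in> {1..n} then c else 0) * F p)
      = (\<Sum>j\<in>{1..n}. \<Sum>k'\<in>{1..n}. if k' = k then c * F (j, k') else 0)"
    unfolding sumV by (intro sum.cong refl) auto
  also have "\<dots> = (\<Sum>j\<in>{1..n}. c * F (j, k))" using assms by (simp add: sum.delta)
  finally show ?thesis by (simp add: sum_distrib_left)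
qed

lemma col_sum2:
  fixes F :: "nat \<times> nat \<Rightarrow> real"
  assumes "k \<in> {1..n}" "i \<in> {1..n}"
  shows "(\<Sum>q\<in>{1..n} \<times> {1..n}. F q * (if k = snd q \<and> i \<in> {1..n} then 1 / real (snd q) else 0))
    = (1 / real k) * (\<Sum>j\<in>{1..n}. F (j, k))"
proof -
  have "(\<Sum>q\<in>{1..n} \<times> {1..n}. F q * (if k = snd q \<and> i \<in> {1..n} then 1 / real (snd q) else 0))
      = (\<Sum>j\<in>{1..n}. \<Sum>k'\<in>{1..n}. if k' = k then F (j, k) / real k else 0)"
    unfolding sumV using assms(2) by (intro sum.cong refl) auto
  also have "\<dots> = (\<Sum>j\<in>{1..n}. F (j, k) / real k)" using assms by (simp add: sum.delta)
  finally show ?thesis by (simp add: sum_divide_distrib)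
qed

lemma sd_NN: "q \<in> {1..n} \<times> {1..n} \<Longrightarrow> sdot ({1..n} \<times> {1..n}) (fst (hrow n A \<mu> \<tau> (NN q))) x = - x q"
  by (simp add: sdot_def ifm sum.delta)

lemma sd_COL: assumes "i \<in> {1..n}" "k \<in> {1..n}"
  shows "sdot ({1..n} \<times> {1..n}) (fst (hrow n A \<mu> \<tau> (COL (i, k)))) x = x (i, k) - (1 / real k) * (\<Sum>j\<in>{1..n}. x (j, k))"
proof -
  have "sdot ({1..n} \<times> {1..n}) (fst (hrow n A \<mu> \<tau> (COL (i, k)))) x
     = (\<Sum>p\<in>{1..n} \<times> {1..n}. (if p = (i, k) then 1 else 0) * x p)
       - (\<Sum>p\<in>{1..n} \<times> {1..n}. (if snd p = k \<and> fst p \<in> {1..n} then 1 / real k else 0) * x p)"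
    by (simp add: sdot_def left_diff_distrib sum_subtractf cong: if_cong)
  also have "(\<Sum>p\<in>{1..n} \<times> {1..n}. (if p = (i, k) then 1 else 0) * x p) = x (i, k)"
    using assms by (simp add: ifm sum.delta)
  also have "(\<Sum>p\<in>{1..n} \<times> {1..n}. (if snd p = k \<and> fst p \<in> {1..n} then 1 / real k else 0) * x p)
      = (1 / real k) * (\<Sum>j\<in>{1..n}. x (j, k))" using assms(2) by (rule col_sum)
  finally show ?thesis .
qed

lemma sd_SM: "sdot ({1..n} \<times> {1..n}) (fst (hrow n A \<mu> \<tau> SM)) x = (\<Sum>i\<in>{1..n}. \<Sum>k\<in>{1..n}. x (i, k) / real k)"
  unfolding sdot_def sumV by (intro sum.cong refl) auto

lemma sd_GM: "sdot ({1..n} \<times> {1..n}) (fst (hrow n A \<mu> \<tau> (GM l))) x = - (\<Sum>i\<in>{1..n}. \<Sum>k\<in>{1..n}. A l i k * x (i, k))"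
  unfolding sdot_def sumV by (simp add: sum_negf[symmetric])

lemma co_NN: "p \<in> {1..n} \<times> {1..n} \<Longrightarrow> (\<Sum>q\<in>{1..n} \<times> {1..n}. y (NN q) * fst (hrow n A \<mu> \<tau> (NN q)) p) = - y (NN p)"
  by (simp add: ifm2 sum.delta')

lemma co_COL: assumes "i \<in> {1..n}" "k \<in> {1..n}"
  shows "(\<Sum>q\<in>{1..n} \<times> {1..n}. y (COL q) * fst (hrow n A \<mu> \<tau> (COL q)) (i, k))
     = y (COL (i, k)) - (1 / real k) * (\<Sum>j\<in>{1..n}. y (COL (j, k)))"
proof -
  have "(\<Sum>q\<in>{1..n} \<times> {1..n}. y (COL q) * fst (hrow n A \<mu> \<tau> (COL q)) (i, k))
     = (\<Sum>q\<in>{1..n} \<times> {1..n}. y (COL q) * (if (i, k) = q then 1 else 0))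
       - (\<Sum>q\<in>{1..n} \<times> {1..n}. y (COL q) * (if k = snd q \<and> i \<in> {1..n} then 1 / real (snd q) else 0))"
    by (simp add: right_diff_distrib sum_subtractf)
  also have "(\<Sum>q\<in>{1..n} \<times> {1..n}. y (COL q) * (if (i, k) = q then 1 else 0)) = y (COL (i, k))"
    using assms by (simp add: ifm2 sum.delta)
  also have "(\<Sum>q\<in>{1..n} \<times> {1..n}. y (COL q) * (if k = snd q \<and> i \<in> {1..n} then 1 / real (snd q) else 0))
      = (1 / real k) * (\<Sum>j\<in>{1..n}. y (COL (j, k)))"
    using col_sum2[OF assms(2,1), of "\<lambda>q. y (COL q)"] by simp
  finally show ?thesis .
qed

lemma cert:
  assumes "(cv, e) \<in> rcone (hrow n A \<mu> \<tau> ` ridxs n t)"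
  shows "\<exists>ynn ycol ys yg. (\<forall>i\<in>{1..n}. \<forall>k\<in>{1..n}. 0 \<le> ynn i k \<and> 0 \<le> ycol i k) \<and> 0 \<le> ys
     \<and> (\<forall>l\<in>{1..t}. 0 \<le> yg l)
     \<and> (\<forall>i\<in>{1..n}. \<forall>k\<in>{1..n}. cv (i, k) = - ynn i k + ycol i k - (1 / real k) * (\<Sum>j\<in>{1..n}. ycol j k)
            + ys / real k - (\<Sum>l\<in>{1..t}. yg l * A l i k))
     \<and> e = ys + (\<Sum>l\<in>{1..t}. yg l * (\<mu> l - \<tau> l))"
proof -
  obtain y where y0: "\<forall>r\<in>ridxs n t. 0 \<le> y r"
    and yf: "\<forall>v. fst (cv, e) v = (\<Sum>r\<in>ridxs n t. y r * fst (hrow n A \<mu> \<tau> r) v)"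
    and ys: "snd (cv, e) = (\<Sum>r\<in>ridxs n t. y r * snd (hrow n A \<mu> \<tau> r))"
    using rcone_index[OF finite_ridxs assms] by blast
  have A1: "\<forall>i\<in>{1..n}. \<forall>k\<in>{1..n}. 0 \<le> y (NN (i, k)) \<and> 0 \<le> y (COL (i, k))"
    using y0 by (auto simp: ridxs_def)
  have A2: "0 \<le> y SM" using y0 by (auto simp: ridxs_def)
  have A3: "\<forall>l\<in>{1..t}. 0 \<le> y (GM l)" using y0 by (auto simp: ridxs_def)
  have A4: "\<forall>i\<in>{1..n}. \<forall>k\<in>{1..n}. cv (i, k) = - y (NN (i, k)) + y (COL (i, k)) - (1 / real k) * (\<Sum>j\<in>{1..n}. y (COL (j, k)))
            + y SM / real k - (\<Sum>l\<in>{1..t}. y (GM l) * A l i k)"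
  proof (intro ballI)
    fix i k assume i: "i \<in> {1..n}" and k: "k \<in> {1..n}"
    have "cv (i, k) = (\<Sum>r\<in>ridxs n t. y r * fst (hrow n A \<mu> \<tau> r) (i, k))" using yf by simp
    also have "\<dots> = (\<Sum>q\<in>{1..n} \<times> {1..n}. y (NN q) * fst (hrow n A \<mu> \<tau> (NN q)) (i, k))
        + (\<Sum>q\<in>{1..n} \<times> {1..n}. y (COL q) * fst (hrow n A \<mu> \<tau> (COL q)) (i, k))
        + y SM * fst (hrow n A \<mu> \<tau> SM) (i, k)
        + (\<Sum>l\<in>{1..t}. y (GM l) * fst (hrow n A \<mu> \<tau> (GM l)) (i, k))"
      by (rule sum_ridxs)
    also have "(\<Sum>q\<in>{1..n} \<times> {1..n}. y (NN q) * fst (hrow n A \<mu> \<tau> (NN q)) (i, k)) = - y (NN (i, k))"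
      using i k by (intro co_NN) auto
    also have "(\<Sum>q\<in>{1..n} \<times> {1..n}. y (COL q) * fst (hrow n A \<mu> \<tau> (COL q)) (i, k))
       = y (COL (i, k)) - (1 / real k) * (\<Sum>j\<in>{1..n}. y (COL (j, k)))" using i k by (rule co_COL)
    also have "y SM * fst (hrow n A \<mu> \<tau> SM) (i, k) = y SM / real k" using i k by simp
    also have "(\<Sum>l\<in>{1..t}. y (GM l) * fst (hrow n A \<mu> \<tau> (GM l)) (i, k)) = - (\<Sum>l\<in>{1..t}. y (GM l) * A l i k)"
      using i k by (simp add: sum_negf[symmetric])
    finally show "cv (i, k) = - y (NN (i, k)) + y (COL (i, k)) - (1 / real k) * (\<Sum>j\<in>{1..n}. y (COL (j, k)))
            + y SM / real k - (\<Sum>l\<in>{1..t}. y (GM l) * A l i k)" by simp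
  qed
  have "e = (\<Sum>r\<in>ridxs n t. y r * snd (hrow n A \<mu> \<tau> r))" using ys by simp
  also have "\<dots> = y SM + (\<Sum>l\<in>{1..t}. y (GM l) * (\<mu> l - \<tau> l))" by (simp add: sum_ridxs)
  finally have A5: "e = y SM + (\<Sum>l\<in>{1..t}. y (GM l) * (\<mu> l - \<tau> l))" .
  show ?thesis
    apply (rule exI[of _ "\<lambda>i k. y (NN (i, k))"], rule exI[of _ "\<lambda>i k. y (COL (i, k))"],
       rule exI[of _ "y SM"], rule exI[of _ "\<lambda>l. y (GM l)"])
    using A1 A2 A3 A4 A5 by blast
qed



lemma dual_build:
  assumes nn: "\<forall>i\<in>{1..n}. \<forall>k\<in>{1..n}. 0 \<le> ynn i k \<and> 0 \<le> ycol i k" and ys0: "0 \<le> ys"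
    and yg0: "\<forall>l\<in>{1..t}. 0 \<le> yg l"
    and eq: "\<forall>i\<in>{1..n}. \<forall>k\<in>{1..n}. W' i k = - ynn i k + ycol i k - (1 / real k) * (\<Sum>j\<in>{1..n}. ycol j k)
            + ys / real k - (\<Sum>l\<in>{1..t}. yg l * A l i k)"
    and s0: "0 \<le> s" and v00: "0 \<le> v0"
    and bnd: "\<forall>i\<in>{1..n}. \<forall>k\<in>{1..n}. real k * W i k - s * (real k * W' i k) \<le> v0"
  shows "dfeas n t W A (\<lambda>i k. s * (real k * ycol i k)) (\<lambda>l. s * yg l) (v0 + s * ys)"
  unfolding dfeas_def
proof (intro conjI ballI)
  fix i k assume i: "i \<in> {1..n}" and k: "k \<in> {1..n}"
  then show "0 \<le> s * (real k * ycol i k)" using nn s0 by auto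
  define K where "K = real k"
  have Kp: "K > 0" using k by (simp add: K_def)
  define S where "S = (\<Sum>j\<in>{1..n}. ycol j k)"
  define G where "G = (\<Sum>l\<in>{1..t}. yg l * A l i k)"
  have h1: "(1 / real k) * (\<Sum>j\<in>{1..n}. s * (real k * ycol j k)) = s * S"
    using Kp by (simp add: S_def K_def sum_distrib_left[symmetric] mult.left_commute[of s])
  have h2: "(\<Sum>l\<in>{1..t}. s * yg l * (real k * A l i k)) = s * K * G"
    by (simp add: G_def K_def sum_distrib_left algebra_simps)
  have h3: "K * W' i k = - K * ynn i k + K * ycol i k - S + ys - K * G"
  proof -
    have "W' i k = - ynn i k + ycol i k - (1 / K) * S + ys / K - G"
      using eq i k by (simp add: K_def S_def G_def)
    then have "K * W' i k = K * (- ynn i k + ycol i k - (1 / K) * S + ys / K - G)" by simp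
    also have "\<dots> = - K * ynn i k + K * ycol i k - S + ys - K * G" using Kp by (simp add: field_simps)
    finally show ?thesis .
  qed
  have h4: "s * (K * W' i k) = s * (- K * ynn i k) + s * (K * ycol i k) - s * S + s * ys - s * (K * G)"
  proof -
    have "s * (K * W' i k) = s * (- K * ynn i k + K * ycol i k - S + ys - K * G)" using h3 by simp
    then show ?thesis by (simp add: algebra_simps)
  qed
  have h5: "0 \<le> s * (K * ynn i k)" using nn i k s0 Kp by simp
  have h6: "K * W i k - s * (K * W' i k) \<le> v0" using bnd i k by (simp add: K_def)
  show "real k * W i k - s * (real k * ycol i k) + 1 / real k * (\<Sum>j\<in>{1..n}. s * (real k * ycol j k))
        + (\<Sum>l\<in>{1..t}. s * yg l * (real k * A l i k)) \<le> v0 + s * ys"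
    unfolding h1 h2 using h4 h5 h6 unfolding K_def[symmetric] by (simp add: algebra_simps)
next
  fix l assume "l \<in> {1..t}" then show "0 \<le> s * yg l" using yg0 s0 by auto
next
  show "0 \<le> v0 + s * ys" using v00 s0 ys0 by simp
qed

lemma abs_le_dsum:
  fixes f :: "nat \<Rightarrow> nat \<Rightarrow> real"
  assumes "i \<in> {1..n}" "k \<in> {1..n}"
  shows "f i k \<le> (\<Sum>i'\<in>{1..n}. \<Sum>k'\<in>{1..n}. \<bar>f i' k'\<bar>)"
proof -
  have "\<bar>f i k\<bar> \<le> (\<Sum>k'\<in>{1..n}. \<bar>f i k'\<bar>)" using assms by (intro member_le_sum) auto
  also have "\<dots> \<le> (\<Sum>i'\<in>{1..n}. \<Sum>k'\<in>{1..n}. \<bar>f i' k'\<bar>)"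
    using assms by (intro member_le_sum[of i "{1..n}" "\<lambda>i'. \<Sum>k'\<in>{1..n}. \<bar>f i' k'\<bar>"] sum_nonneg) auto
  finally show ?thesis by linarith
qed

lemma strong_duality:
  fixes W :: "nat \<Rightarrow> nat \<Rightarrow> real" and A :: "nat \<Rightarrow> nat \<Rightarrow> nat \<Rightarrow> real" and \<mu> \<tau> :: "nat \<Rightarrow> real"
  assumes hyp: "\<forall>P\<in>Delta n. (\<forall>l\<in>{1..t}. \<tau> l \<le> \<mu> l + lsum n (A l) P) \<longrightarrow> lsum n W P \<le> d"
  shows "\<exists>\<alpha> \<beta> v. dfeas n t W A \<alpha> \<beta> v \<and> v + (\<Sum>l\<in>{1..t}. \<beta> l * (\<mu> l - \<tau> l)) \<le> d"
proof -
  define V where "V = {1..n} \<times> {1..n}"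
  define R where "R = hrow n A \<mu> \<tau> ` ridxs n t"
  define cW where "cW = (\<lambda>p. if p \<in> V then W (fst p) (snd p) else 0)"
  have fw: "(0, 0) \<notin> V" by (simp add: V_def)
  have finV: "finite V" by (simp add: V_def)
  have finR: "finite R" by (simp add: R_def finite_ridxs)
  have suppR: "\<forall>r\<in>R. supp V (fst r)"
  proof
    fix r assume "r \<in> R"
    then obtain \<iota> where \<iota>: "\<iota> \<in> ridxs n t" "r = hrow n A \<mu> \<tau> \<iota>" by (auto simp: R_def)
    show "supp V (fst r)"
      unfolding supp_def
    proof (intro allI impI)
      fix p assume p: "p \<notin> V"
      show "fst r p = 0"
        using \<iota> p by (cases p) (auto simp: ridxs_def V_def)
    qed
  qed
  have suppc: "supp V cW" by (simp add: supp_def cW_def)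
  have imp: "\<forall>x. sat V R x \<longrightarrow> sdot V cW x \<le> d"
  proof (intro allI impI)
    fix x assume sx: "sat V R x"
    have row: "sdot V (fst (hrow n A \<mu> \<tau> \<iota>)) x \<le> snd (hrow n A \<mu> \<tau> \<iota>)" if "\<iota> \<in> ridxs n t" for \<iota>
      using sx that by (auto simp: sat_def R_def)
    define P where "P = (\<lambda>i k. if (i, k) \<in> V then x (i, k) else 0)"
    have Pin: "P i k = x (i, k)" if "i \<in> {1..n}" "k \<in> {1..n}" for i k using that by (simp add: P_def V_def)
    have colsum: "(\<Sum>j\<in>{1..n}. P j k) = (\<Sum>j\<in>{1..n}. x (j, k))" if "k \<in> {1..n}" for k
      using that Pin by (intro sum.cong) auto
    have lsumP: "lsum n C P = (\<Sum>i\<in>{1..n}. \<Sum>k\<in>{1..n}. C i k * x (i, k))" for C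
      unfolding lsum_def by (intro sum.cong refl) (simp add: Pin)
    have PD: "P \<in> Delta n"
      unfolding Delta_def
    proof (intro CollectI conjI allI impI ballI)
      fix i k assume "i \<notin> {1..n} \<or> k \<notin> {1..n}" then show "P i k = 0" by (auto simp: P_def V_def)
    next
      fix i k assume i: "i \<in> {1..n}" and k: "k \<in> {1..n}"
      have "sdot V (fst (hrow n A \<mu> \<tau> (NN (i, k)))) x \<le> 0" using row[of "NN (i, k)"] i k by (auto simp: ridxs_def)
      then show "0 \<le> P i k" using sd_NN[of "(i, k)" n A \<mu> \<tau> x] i k Pin by (simp add: V_def)
      have "sdot V (fst (hrow n A \<mu> \<tau> (COL (i, k)))) x \<le> 0" using row[of "COL (i, k)"] i k by (auto simp: ridxs_def)
      then show "P i k \<le> 1 / real k * (\<Sum>j\<in>{1..n}. P j k)"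
        using sd_COL[OF i k, of A \<mu> \<tau> x] Pin[OF i k] colsum[OF k] by (simp add: V_def)
    next
      have "sdot V (fst (hrow n A \<mu> \<tau> SM)) x \<le> 1" using row[of SM] by (auto simp: ridxs_def)
      then have "(\<Sum>i\<in>{1..n}. \<Sum>k\<in>{1..n}. x (i, k) / real k) \<le> 1" using sd_SM by (simp add: V_def)
      moreover have "(\<Sum>k\<in>{1..n}. 1 / real k * (\<Sum>i\<in>{1..n}. P i k)) = (\<Sum>k\<in>{1..n}. \<Sum>i\<in>{1..n}. x (i, k) / real k)"
      proof -
        have "(\<Sum>k\<in>{1..n}. 1 / real k * (\<Sum>i\<in>{1..n}. P i k)) = (\<Sum>k\<in>{1..n}. \<Sum>i\<in>{1..n}. P i k / real k)"
          by (simp add: sum_divide_distrib)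
        also have "\<dots> = (\<Sum>k\<in>{1..n}. \<Sum>i\<in>{1..n}. x (i, k) / real k)"
          by (intro sum.cong refl) (simp add: Pin)
        finally show ?thesis .
      qed
      moreover have "(\<Sum>k\<in>{1..n}. \<Sum>i\<in>{1..n}. x (i, k) / real k) = (\<Sum>i\<in>{1..n}. \<Sum>k\<in>{1..n}. x (i, k) / real k)"
        by (rule sum.swap)
      ultimately show "(\<Sum>k\<in>{1..n}. 1 / real k * (\<Sum>i\<in>{1..n}. P i k)) \<le> 1" by simp
    qed
    have PG: "\<forall>l\<in>{1..t}. \<tau> l \<le> \<mu> l + lsum n (A l) P"
    proof
      fix l assume l: "l \<in> {1..t}"
      have "sdot V (fst (hrow n A \<mu> \<tau> (GM l))) x \<le> \<mu> l - \<tau> l" using row[of "GM l"] l by (auto simp: ridxs_def)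
      then show "\<tau> l \<le> \<mu> l + lsum n (A l) P" using sd_GM[of n A \<mu> \<tau> l x] by (simp add: V_def lsumP)
    qed
    have "sdot V cW x = lsum n W P"
      unfolding sdot_def V_def sumV lsumP cW_def by (intro sum.cong refl) simp
    then show "sdot V cW x \<le> d" using hyp PD PG by simp
  qed
  have "(\<exists>b'<0. ((\<lambda>v. 0), b') \<in> rcone R) \<or> (\<exists>d'\<le>d. (cW, d') \<in> rcone R)"
    by (rule farkas[OF finV fw finR suppR suppc imp])
  then show ?thesis
  proof (elim disjE exE conjE)
    fix b' assume b': "b' < 0" "((\<lambda>v. 0), b') \<in> rcone R"
    obtain ynn ycol ys yg where c1: "\<forall>i\<in>{1..n}. \<forall>k\<in>{1..n}. 0 \<le> ynn i k \<and> 0 \<le> ycol i k" and c2: "0 \<le> ys"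
      and c3: "\<forall>l\<in>{1..t}. 0 \<le> yg l"
      and c4: "\<forall>i\<in>{1..n}. \<forall>k\<in>{1..n}. (\<lambda>v. 0::real) (i, k) = - ynn i k + ycol i k - (1 / real k) * (\<Sum>j\<in>{1..n}. ycol j k)
            + ys / real k - (\<Sum>l\<in>{1..t}. yg l * A l i k)"
      and c5: "b' = ys + (\<Sum>l\<in>{1..t}. yg l * (\<mu> l - \<tau> l))"
      using cert[OF b'(2)[unfolded R_def]] by blast
    define v0 where "v0 = (\<Sum>i'\<in>{1..n}. \<Sum>k'\<in>{1..n}. \<bar>real k' * W i' k'\<bar>)"
    define s where "s = \<bar>v0 - d\<bar> / (- b')"
    have s0: "0 \<le> s" using b' unfolding s_def by (intro divide_nonneg_pos) auto
    have v00: "0 \<le> v0" by (simp add: v0_def sum_nonneg)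
    have c4': "\<forall>i\<in>{1..n}. \<forall>k\<in>{1..n}. (\<lambda>i k. 0::real) i k = - ynn i k + ycol i k - (1 / real k) * (\<Sum>j\<in>{1..n}. ycol j k)
            + ys / real k - (\<Sum>l\<in>{1..t}. yg l * A l i k)" using c4 by simp
    have bnd: "\<forall>i\<in>{1..n}. \<forall>k\<in>{1..n}. real k * W i k - s * (real k * (\<lambda>i k. 0::real) i k) \<le> v0"
      using abs_le_dsum[of _ n _ "\<lambda>i k. real k * W i k"] by (simp add: v0_def)
    have F: "dfeas n t W A (\<lambda>i k. s * (real k * ycol i k)) (\<lambda>l. s * yg l) (v0 + s * ys)"
      by (rule dual_build[OF c1 c2 c3 c4' s0 v00 bnd])
    have "v0 + s * ys + (\<Sum>l\<in>{1..t}. s * yg l * (\<mu> l - \<tau> l)) = v0 + s * b'"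
      by (simp add: c5 sum_distrib_left algebra_simps)
    also have "\<dots> = v0 - \<bar>v0 - d\<bar>" using b' by (simp add: s_def)
    also have "\<dots> \<le> d" by linarith
    finally show ?thesis using F by blast
  next
    fix d' assume d': "d' \<le> d" "(cW, d') \<in> rcone R"
    obtain ynn ycol ys yg where c1: "\<forall>i\<in>{1..n}. \<forall>k\<in>{1..n}. 0 \<le> ynn i k \<and> 0 \<le> ycol i k" and c2: "0 \<le> ys"
      and c3: "\<forall>l\<in>{1..t}. 0 \<le> yg l"
      and c4: "\<forall>i\<in>{1..n}. \<forall>k\<in>{1..n}. cW (i, k) = - ynn i k + ycol i k - (1 / real k) * (\<Sum>j\<in>{1..n}. ycol j k)
            + ys / real k - (\<Sum>l\<in>{1..t}. yg l * A l i k)"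
      and c5: "d' = ys + (\<Sum>l\<in>{1..t}. yg l * (\<mu> l - \<tau> l))"
      using cert[OF d'(2)[unfolded R_def]] by blast
    have c4': "\<forall>i\<in>{1..n}. \<forall>k\<in>{1..n}. W i k = - ynn i k + ycol i k - (1 / real k) * (\<Sum>j\<in>{1..n}. ycol j k)
            + ys / real k - (\<Sum>l\<in>{1..t}. yg l * A l i k)" using c4 by (simp add: cW_def V_def)
    have bnd: "\<forall>i\<in>{1..n}. \<forall>k\<in>{1..n}. real k * W i k - 1 * (real k * W i k) \<le> 0" by simp
    have F: "dfeas n t W A (\<lambda>i k. 1 * (real k * ycol i k)) (\<lambda>l. 1 * yg l) (0 + 1 * ys)"
      by (rule dual_build[OF c1 c2 c3 c4' _ _ bnd]) auto
    have "0 + 1 * ys + (\<Sum>l\<in>{1..t}. 1 * yg l * (\<mu> l - \<tau> l)) = d'" by (simp add: c5)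
    then show ?thesis using F d'(1) by (metis order_refl)
  qed
qed



theorem theorem6:
  fixes n t :: nat
    and a b :: "nat \<Rightarrow> nat \<Rightarrow> real"
    and f g :: "nat \<Rightarrow> nat \<Rightarrow> nat \<Rightarrow> nat \<Rightarrow> real"
    and J :: "nat \<Rightarrow> nat"
    and y :: "nat \<Rightarrow> nat"
  assumes "n \<ge> 1" and "t \<ge> 1"
    and "\<forall>i\<in>{1..n}. y i \<in> {0, 1}"
    and "\<forall>i\<le>t. \<forall>j<J i. \<forall>k\<le>n. \<forall>l\<le>n. g i j k l \<noteq> 0"
  shows "\<exists>c0 C Z0 ZL (\<mu>::nat \<Rightarrow> real) (B::nat \<Rightarrow> nat \<Rightarrow> nat \<Rightarrow> real).
           \<forall>(\<tau>::nat \<Rightarrow> real) (m::nat) (Psi::nat \<Rightarrow> nat \<Rightarrow> real) (\<theta>::nat \<Rightarrow> real).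
             m \<ge> 1 \<longrightarrow>
             game_value n t m a b f g J y \<tau> Psi \<theta>
             = lp_value n t m (aff_scalar n c0 C) (aff_matrix n Z0 ZL) \<mu> B \<tau> Psi \<theta>"
proof -
  obtain K0 K1 L0 L where OD: "\<forall>Q P. O0 n a b f g J Q P = K0 + lsum n K1 Q + lsum n (\<lambda>i k. L0 i k + lsum n (L i k) Q) P"
    using biaff_O0[of n a b f g J] unfolding biaff_def by blast
  define Gx where "Gx l P = (\<Sum>k\<in>{0..n}. \<Sum>j<J l.
        (1 / g l j k (lstar n y)) * (a l j * dotv n (pv1 P k) (\<lambda>s. real (y s))
           + b l j * dotv n (pv0 n P k) (\<lambda>s. 1 - real (y s))
           + f l j k (lstar n y) * rr n P k))" for l P
  have "aff n (Gx l)" for l unfolding Gx_def by (rule aff_Gam)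
  then have "\<forall>l. \<exists>c0 C. \<forall>P. Gx l P = c0 + lsum n C P"
    unfolding aff_def by blast
  then obtain \<mu>' A where GD: "\<forall>l P. Gx l P = \<mu>' l + lsum n (A l) P"
    by metis
  have Gam: "P \<in> Gamma n t a b f g J y \<tau> \<longleftrightarrow> (\<forall>l\<in>{1..t}. \<tau> l \<le> \<mu>' l + lsum n (A l) P)" for P \<tau>
  proof -
    have "P \<in> Gamma n t a b f g J y \<tau> \<longleftrightarrow> (\<forall>l\<in>{1..t}. \<tau> l \<le> Gx l P)"
      unfolding Gamma_def Gx_def by simp
    then show ?thesis using GD by simp
  qed
  define Wq where "Wq Q = (\<lambda>i k. L0 i k + lsum n (L i k) Q)" for Q
  have AM: "aff_matrix n (\<lambda>i k. real k * L0 i k) (\<lambda>i k j l. real k * L i k j l) Q i k = real k * Wq Q i k" for Q i k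
    by (simp add: aff_matrix_def Wq_def lsum_def sum_distrib_left algebra_simps)
  show ?thesis
  proof (intro exI allI impI)
    fix \<tau> :: "nat \<Rightarrow> real" and m :: nat and Psi :: "nat \<Rightarrow> nat \<Rightarrow> real" and \<theta> :: "nat \<Rightarrow> real"
    define Kc where "Kc Q = aff_scalar n K0 K1 Q - (\<Sum>i\<in>{1..n}. \<Sum>k\<in>{1..n}. Q i k * PsiT m Psi \<theta> i)" for Q
    have Obj: "O0 n a b f g J Q P - dotv n (\<lambda>i. \<Sum>k\<in>{1..n}. Q i k) (PsiT m Psi \<theta>) = Kc Q + lsum n (Wq Q) P" for Q P
    proof -
      have "dotv n (\<lambda>i. \<Sum>k\<in>{1..n}. Q i k) (PsiT m Psi \<theta>) = (\<Sum>i\<in>{1..n}. \<Sum>k\<in>{1..n}. Q i k * PsiT m Psi \<theta> i)"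
        by (simp add: dotv_def sum_distrib_right)
      moreover have "aff_scalar n K0 K1 Q = K0 + lsum n K1 Q" by (simp add: aff_scalar_def lsum_def)
      ultimately show ?thesis using OD by (simp add: Kc_def Wq_def)
    qed
    define LPS where "LPS = {ereal (v + aff_scalar n K0 K1 Q - (\<Sum>i\<in>{1..n}. \<Sum>k\<in>{1..n}. Q i k * PsiT m Psi \<theta> i)
                  + (\<Sum>l\<in>{1..t}. \<beta> l * (\<mu>' l - \<tau> l)))
          | Q \<alpha> \<beta> v. Q \<in> Delta n
              \<and> (\<forall>i\<in>{1..n}. \<forall>k\<in>{1..n}. 0 \<le> \<alpha> i k)
              \<and> (\<forall>l\<in>{1..t}. 0 \<le> (\<beta>::nat \<Rightarrow> real) l)
              \<and> 0 \<le> (v::real)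
              \<and> (\<forall>i\<in>{1..n}. \<forall>k\<in>{1..n}.
                   v \<ge> aff_matrix n (\<lambda>i k. real k * L0 i k) (\<lambda>i k j l. real k * L i k j l) Q i k - \<alpha> i k + (1 / real k) * (\<Sum>j\<in>{1..n}. \<alpha> j k)
                        + (\<Sum>l\<in>{1..t}. \<beta> l * (real k * A l i k)))}"
    have lpv: "lp_value n t m (aff_scalar n K0 K1) (aff_matrix n (\<lambda>i k. real k * L0 i k) (\<lambda>i k j l. real k * L i k j l))
        \<mu>' (\<lambda>l i k. real k * A l i k) \<tau> Psi \<theta> = Inf LPS"
      unfolding lp_value_def LPS_def by simp
    have LPSI: "x \<in> LPS \<longleftrightarrow> (\<exists>Q \<alpha> \<beta> v. Q \<in> Delta n \<and> dfeas n t (Wq Q) A \<alpha> \<beta> v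
        \<and> x = ereal (v + Kc Q + (\<Sum>l\<in>{1..t}. \<beta> l * (\<mu>' l - \<tau> l))))" for x
      unfolding LPS_def dfeas_def AM Kc_def by (auto simp: algebra_simps)
    define S where "S Q = (SUP P\<in>Delta n \<inter> Gamma n t a b f g J y \<tau>. ereal (Kc Q + lsum n (Wq Q) P))" for Q
    have gv: "game_value n t m a b f g J y \<tau> Psi \<theta> = (INF Q\<in>Delta n. S Q)"
      unfolding game_value_def S_def Obj by simp
    have le1: "(INF Q\<in>Delta n. S Q) \<le> Inf LPS"
    proof (rule Inf_greatest)
      fix x assume "x \<in> LPS"
      then obtain Q \<alpha> \<beta> v where Q: "Q \<in> Delta n" and F: "dfeas n t (Wq Q) A \<alpha> \<beta> v"
        and x: "x = ereal (v + Kc Q + (\<Sum>l\<in>{1..t}. \<beta> l * (\<mu>' l - \<tau> l)))" unfolding LPSI by blast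
      have "(INF Q\<in>Delta n. S Q) \<le> S Q" using Q by (rule INF_lower)
      also have "S Q \<le> x"
        unfolding S_def
      proof (rule SUP_least)
        fix P assume P: "P \<in> Delta n \<inter> Gamma n t a b f g J y \<tau>"
        then have "lsum n (Wq Q) P \<le> v + (\<Sum>l\<in>{1..t}. \<beta> l * (\<mu>' l - \<tau> l))"
          using weak_duality[of P n t \<tau> \<mu>' A "Wq Q" \<alpha> \<beta> v] F Gam by auto
        then show "ereal (Kc Q + lsum n (Wq Q) P) \<le> x" unfolding x by simp
      qed
      finally show "(INF Q\<in>Delta n. S Q) \<le> x" .
    qed
    have le2: "Inf LPS \<le> (INF Q\<in>Delta n. S Q)"
    proof (rule INF_greatest)
      fix Q assume Q: "Q \<in> Delta n"
      show "Inf LPS \<le> S Q"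
      proof (rule ccontr)
        assume "\<not> Inf LPS \<le> S Q"
        then have "S Q < Inf LPS" by simp
        then obtain d where d: "S Q < ereal d" "ereal d < Inf LPS" using ereal_dense2 by blast
        have "\<forall>P\<in>Delta n. (\<forall>l\<in>{1..t}. \<tau> l \<le> \<mu>' l + lsum n (A l) P) \<longrightarrow> lsum n (Wq Q) P \<le> d - Kc Q"
        proof (intro ballI impI)
          fix P assume P: "P \<in> Delta n" "\<forall>l\<in>{1..t}. \<tau> l \<le> \<mu>' l + lsum n (A l) P"
          then have "P \<in> Delta n \<inter> Gamma n t a b f g J y \<tau>" using Gam by auto
          then have "ereal (Kc Q + lsum n (Wq Q) P) \<le> S Q" unfolding S_def by (rule SUP_upper)
          then have "ereal (Kc Q + lsum n (Wq Q) P) < ereal d" using d(1) by (rule le_less_trans)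
          then show "lsum n (Wq Q) P \<le> d - Kc Q" by simp
        qed
        from strong_duality[OF this] obtain \<alpha> \<beta> v where F: "dfeas n t (Wq Q) A \<alpha> \<beta> v"
          and vd: "v + (\<Sum>l\<in>{1..t}. \<beta> l * (\<mu>' l - \<tau> l)) \<le> d - Kc Q" by blast
        have "ereal (v + Kc Q + (\<Sum>l\<in>{1..t}. \<beta> l * (\<mu>' l - \<tau> l))) \<in> LPS"
          unfolding LPSI using Q F by blast
        then have "Inf LPS \<le> ereal (v + Kc Q + (\<Sum>l\<in>{1..t}. \<beta> l * (\<mu>' l - \<tau> l)))" by (rule Inf_lower)
        also have "\<dots> \<le> ereal d" using vd by simp
        finally show False using d(2) by simp
      qed
    qed
    show "game_value n t m a b f g J y \<tau> Psi \<theta>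
        = lp_value n t m (aff_scalar n K0 K1) (aff_matrix n (\<lambda>i k. real k * L0 i k) (\<lambda>i k j l. real k * L i k j l))
            \<mu>' (\<lambda>l i k. real k * A l i k) \<tau> Psi \<theta>"
      unfolding gv lpv using le1 le2 by (rule order.antisym)
  qed
qed

end
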